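(* Let $X\in\mathbb{R}^{n\times D}$ and $Y\in\mathbb{R}^{n\times m}$ with $D>n\geq r:=\mathrm{rank}(X)$, and let $h$ be a positive integer with $h\geq\min\{m,D\}$. Write the compact SVD of $X$ as $X=W\begin{bmatrix}\Sigma_x^{1/2} & 0\end{bmatrix}\begin{bmatrix}\Phi_1^T\\ \Phi_2^T\end{bmatrix}$, where $W\in\mathbb{R}^{n\times r}$ has orthonormal columns, $\Sigma_x\in\mathbb{R}^{r\times r}$ is diagonal with positive diagonal entries, $\Phi_1\in\mathbb{R}^{D\times r}$, $\Phi_2\in\mathbb{R}^{D\times(D-r)}$, and $[\Phi_1\ \Phi_2]$ is an orthogonal matrix. For $V\in\mathbb{R}^{m\times h}$ and $U_1\in\mathbb{R}^{r\times h}$ define the error $E(V,U_1)=W^TY-\Sigma_x^{1/2}U_1V^T$. Let $(V(t),U_1(t))$, $t\ge 0$, be the solution of $$\dot V=E^T\Sigma_x^{1/2}U_1,\qquad \dot U_1=\Sigma_x^{1/2}EV,$$ with $E=E(V(t),U_1(t))$, starting from some $(V(0),U_1(0))$ (together with $U_2(t)\equiv U_2(0)\in\mathbb{R}^{(D-r)\times h}$; this is exactly the gradient flow of $\mathcal{L}(V,U)=\frac12\|Y-XUV^T\|_F^2$ written in the coordinates $U=\Phi_1U_1+\Phi_2U_2$). Let $\mathcal{L}(t)=\frac12\|Y-XU(t)V(t)^T\|_F^2$ with $U(t)=\Phi_1U_1(t)+\Phi_2U_2(t)$, and $\mathcal{L}^*=\frac12\|(I-WW^T)Y\|_F^2$.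 Let $\Lambda(0)=U_1(0)^TU_1(0)-V(0)^TV(0)\in\mathbb{R}^{h\times h}$ and $$c:=[\lambda_r(\Lambda(0))]_++[\lambda_m(-\Lambda(0))]_+,$$ where $[a]_+=\max\{a,0\}$, and $\lambda_r(\Lambda(0))$ (resp. $\lambda_m(-\Lambda(0))$) is taken to be $0$ if $h<r$ (resp. $h<m$). Then $$\mathcal{L}(t)-\mathcal{L}^*\leq \exp\left(-2\lambda_r(\Sigma_x)\,c\,t\right)(\mathcal{L}(0)-\mathcal{L}^* )\quad\text{for all } t>0.$$ Moreover, if $h\geq m+r$, then $c=\lambda_r(\Lambda(0))+\lambda_m(-\Lambda(0))$. Additionally, if $c>0$, then $(V(t),U_1(t))$ converges as $t\to\infty$ to an equilibrium point $(V(\infty),U_1(\infty))$ such that $E(V(\infty),U_1(\infty))=0$.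
   Context: $\lambda_i(A)$ denotes the $i$-th largest eigenvalue of a symmetric matrix $A$. The matrix $\Lambda=U_1^TU_1-V^TV$ is called the imbalance of the network. $\mathcal{L}^*$ is the optimal value of $\min_{\Theta\in\mathbb{R}^{D\times m}}\frac12\|Y-X\Theta\|_F^2$. *)

theory Defs
  imports "Jordan_Normal_Form.Char_Poly" "Jordan_Normal_Form.DL_Rank" "HOL-Library.Multiset"
begin

definition append_cols :: "real mat \<Rightarrow> real mat \<Rightarrow> real mat" where
  "append_cols A B = mat (dim_row A) (dim_col A + dim_col B)
     (\<lambda>(i,j). if j < dim_col A then A $$ (i,j) else B $$ (i, j - dim_col A))"

definition diag_sqrt :: "real mat \<Rightarrow> real mat" where
  "diag_sqrt S = mat (dim_row S) (dim_col S) (\<lambda>(i,j). if i = j then sqrt (S $$ (i,i)) else 0)"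

definition frob_sq :: "real mat \<Rightarrow> real" where
  "frob_sq A = (\<Sum>i<dim_row A. \<Sum>j<dim_col A. (A $$ (i,j))^2)"

text \<open>Eigenvalues (roots of the characteristic polynomial, with multiplicity) in
  non-increasing order; for a real symmetric matrix these are all its eigenvalues.\<close>
definition eigs_desc :: "real mat \<Rightarrow> real list" where
  "eigs_desc A = rev (sorted_list_of_multiset (proots (char_poly A)))"

text \<open>\<open>lam A i\<close> = i-th largest eigenvalue (1-based); 0 if out of range.\<close>
definition lam :: "real mat \<Rightarrow> nat \<Rightarrow> real" where
  "lam A i = (if 1 \<le> i \<and> i \<le> length (eigs_desc A) then eigs_desc A ! (i - 1) else 0)"

definition pos_part :: "real \<Rightarrow> real" where
  "pos_part a = max a 0"

definition mat_has_deriv :: "(real \<Rightarrow> real mat) \<Rightarrow> real mat \<Rightarrow> real filter \<Rightarrow> bool" where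
  "mat_has_deriv F F' net \<longleftrightarrow>
     (\<forall>i<dim_row F'. \<forall>j<dim_col F'. ((\<lambda>t. F t $$ (i,j)) has_real_derivative F' $$ (i,j)) net)"

definition mat_tendsto_at_top :: "(real \<Rightarrow> real mat) \<Rightarrow> real mat \<Rightarrow> bool" where
  "mat_tendsto_at_top F L \<longleftrightarrow>
     (\<forall>i<dim_row L. \<forall>j<dim_col L. ((\<lambda>t. F t $$ (i,j)) \<longlongrightarrow> L $$ (i,j)) at_top)"

definition err :: "real mat \<Rightarrow> real mat \<Rightarrow> real mat \<Rightarrow> real mat \<Rightarrow> real mat \<Rightarrow> real mat" where
  "err W Y Sx V U1 = W\<^sup>T * Y - diag_sqrt Sx * U1 * V\<^sup>T"

end

theory Submission
  imports Defs
begin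

lemma sym_real_root:
  fixes A :: "real mat"
  assumes A: "A \<in> carrier_mat n n" and sym: "A\<^sup>T = A" and n: "n > 0"
  shows "\<exists>x. poly (char_poly A) x = 0"
proof -
  let ?Ac = "map_mat complex_of_real A"
  have Ac: "?Ac \<in> carrier_mat n n" using A by auto
  obtain as where cp: "char_poly ?Ac = (\<Prod>a\<leftarrow>as. [:-a,1:])" and las: "length as = n"
    using char_poly_factorized[OF Ac] by auto
  define z where "z = as ! 0"
  have zin: "z \<in> set as" using las n unfolding z_def by auto
  have "poly (char_poly ?Ac) z = 0" unfolding cp poly_prod_list
    using zin by (auto simp: prod_list_zero_iff)
  then have "eigenvalue ?Ac z" using eigenvalue_root_char_poly[OF Ac] by simp
  then obtain v where v: "v \<in> carrier_vec n" "v \<noteq> 0\<^sub>v n" "?Ac *\<^sub>v v = z \<cdot>\<^sub>v v"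
    unfolding eigenvalue_def eigenvector_def using Ac by auto
  have symA: "\<And>i j. i < n \<Longrightarrow> j < n \<Longrightarrow> A $$ (j,i) = A $$ (i,j)"
    using sym A by (metis carrier_matD index_transpose_mat(1))
  define s where "s = (\<Sum>i\<in>{0..<n}. \<Sum>j\<in>{0..<n}. cnj (v$i) * complex_of_real (A$$(i,j)) * v$j)"
  have rowi: "\<And>i. i < n \<Longrightarrow> (\<Sum>j\<in>{0..<n}. complex_of_real (A$$(i,j)) * v$j) = z * v$i"
  proof -
    fix i assume i: "i < n"
    have "(?Ac *\<^sub>v v) $ i = z * v $ i" using v(3) v(1) i by simp
    moreover have "(?Ac *\<^sub>v v) $ i = (\<Sum>j\<in>{0..<n}. complex_of_real (A$$(i,j)) * v$j)"
      using i A v(1) by (simp add: scalar_prod_def)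
    ultimately show "(\<Sum>j\<in>{0..<n}. complex_of_real (A$$(i,j)) * v$j) = z * v$i" by simp
  qed
  have s1: "s = z * (\<Sum>i\<in>{0..<n}. cnj (v$i) * v$i)"
  proof -
    have "s = (\<Sum>i\<in>{0..<n}. cnj (v$i) * (\<Sum>j\<in>{0..<n}. complex_of_real (A$$(i,j)) * v$j))"
      unfolding s_def by (simp add: sum_distrib_left mult.assoc)
    also have "\<dots> = (\<Sum>i\<in>{0..<n}. cnj (v$i) * (z * v$i))"
      by (rule sum.cong, simp, simp add: rowi)
    finally show ?thesis by (simp add: sum_distrib_left mult_ac)
  qed
  have s2: "cnj s = s"
  proof -
    have "cnj s = (\<Sum>i\<in>{0..<n}. \<Sum>j\<in>{0..<n}. v$i * complex_of_real (A$$(i,j)) * cnj (v$j))"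
      unfolding s_def by (simp add: cnj_sum)
    also have "\<dots> = (\<Sum>j\<in>{0..<n}. \<Sum>i\<in>{0..<n}. v$i * complex_of_real (A$$(i,j)) * cnj (v$j))"
      by (rule sum.swap)
    also have "\<dots> = s" unfolding s_def
      by (rule sum.cong, simp, rule sum.cong, simp, simp add: symA mult_ac)
    finally show ?thesis .
  qed
  define p where "p = (\<Sum>i\<in>{0..<n}. (cmod (v$i))\<^sup>2)"
  have pc: "(\<Sum>i\<in>{0..<n}. cnj (v$i) * v$i) = complex_of_real p"
  proof -
    have "(\<Sum>i\<in>{0..<n}. cnj (v$i) * v$i) = (\<Sum>i\<in>{0..<n}. complex_of_real ((cmod (v$i))\<^sup>2))"
      by (rule sum.cong, simp, simp add: complex_norm_square[symmetric] mult.commute)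
    then show ?thesis unfolding p_def by simp
  qed
  have ppos: "p > 0"
  proof -
    obtain i where i: "i < n" "v $ i \<noteq> 0" using v(1,2) by (metis vec_eq_iff carrier_vecD index_zero_vec(1,2))
    have "(cmod (v$i))\<^sup>2 \<le> p" unfolding p_def
      by (rule member_le_sum) (use i in auto)
    moreover have "(cmod (v$i))\<^sup>2 > 0" using i by simp
    ultimately show ?thesis by linarith
  qed
  have "z = s / complex_of_real p" using s1 pc ppos by simp
  then have "cnj z = z" using s2 by simp
  then have "Im z = 0" by (metis cnj.simps(2) complex_cnj_cancel_iff neg_equal_zero cnj.sel(2))
  then have zr: "z = complex_of_real (Re z)" by (simp add: complex_eq_iff)
  have "poly (map_poly complex_of_real (char_poly A)) z = 0"
    using \<open>poly (char_poly ?Ac) z = 0\<close> of_real_hom.char_poly_hom[OF A] by metis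
  then have "poly (map_poly complex_of_real (char_poly A)) (complex_of_real (Re z)) = 0"
    using zr by metis
  then have "complex_of_real (poly (char_poly A) (Re z)) = 0"
    by (simp add: of_real_hom.poly_map_poly)
  then show ?thesis by auto
qed

definition hhw :: "real vec \<Rightarrow> nat \<Rightarrow> real" where
  "hhw v k = v $ k - (if k = 0 then 1 else 0)"

definition hh :: "real vec \<Rightarrow> real mat" where
  "hh v = mat (dim_vec v) (dim_vec v)
     (\<lambda>(i,j). (if i = j then 1 else 0) - 2 * hhw v i * hhw v j / (\<Sum>k\<in>{0..<dim_vec v}. (hhw v k)\<^sup>2))"

lemma hh_carrier: "v \<in> carrier_vec n \<Longrightarrow> hh v \<in> carrier_mat n n"
  unfolding hh_def by auto

lemma hh_orth:
  assumes v: "v \<in> carrier_vec n"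
  shows "(hh v)\<^sup>T * hh v = 1\<^sub>m n"
proof (rule eq_matI)
  define s where "s = (\<Sum>k\<in>{0..<n}. (hhw v k)\<^sup>2)"
  have dv: "dim_vec v = n" using v by auto
  fix i j assume i: "i < dim_row (1\<^sub>m n)" and j: "j < dim_col (1\<^sub>m n)"
  then have i: "i < n" and j: "j < n" by auto
  define w where "w = hhw v"
  have Q: "\<And>a b. a < n \<Longrightarrow> b < n \<Longrightarrow> hh v $$ (a,b) = (if a = b then 1 else 0) - 2 * w a * w b / s"
    unfolding hh_def s_def w_def dv by auto
  have "((hh v)\<^sup>T * hh v) $$ (i,j) = (\<Sum>k\<in>{0..<n}. hh v $$ (k,i) * hh v $$ (k,j))"
    using i j hh_carrier[OF v] by (simp add: scalar_prod_def)
  also have "\<dots> = (\<Sum>k\<in>{0..<n}. ((if k = i then 1 else 0) - 2 * w k * w i / s) * ((if k = j then 1 else 0) - 2 * w k * w j / s))"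
    by (rule sum.cong, simp, simp add: Q i j)
  also have "\<dots> = (\<Sum>k\<in>{0..<n}. (if k = i then (if k = j then 1 else 0) else 0))
      - (\<Sum>k\<in>{0..<n}. (if k = i then 2 * w k * w j / s else 0))
      - (\<Sum>k\<in>{0..<n}. (if k = j then 2 * w k * w i / s else 0))
      + (\<Sum>k\<in>{0..<n}. 4 * w i * w j / (s*s) * (w k)\<^sup>2)"
  proof -
    have "(\<Sum>k\<in>{0..<n}. ((if k = i then 1 else 0) - 2 * w k * w i / s) * ((if k = j then 1 else 0) - 2 * w k * w j / s))
      = (\<Sum>k\<in>{0..<n}. (if k = i then (if k = j then 1 else 0) else 0) - (if k = i then 2 * w k * w j / s else 0)
          - (if k = j then 2 * w k * w i / s else 0) + 4 * w i * w j / (s*s) * (w k)\<^sup>2)"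
      by (rule sum.cong, simp, cases "s = 0", auto simp: field_simps power2_eq_square)
    then show ?thesis by (simp add: sum.distrib sum_subtractf)
  qed
  also have "\<dots> = (if i = j then 1 else 0) - 4 * w i * w j / s + 4 * w i * w j / (s*s) * s"
  proof -
    have "(\<Sum>k\<in>{0..<n}. 4 * w i * w j / (s*s) * (w k)\<^sup>2) = 4 * w i * w j / (s*s) * s"
      by (subst sum_distrib_left[symmetric]) (simp add: s_def w_def)
    then show ?thesis using i j by simp
  qed
  also have "\<dots> = (if i = j then 1 else 0)"
  proof (cases "s = 0")
    case True then show ?thesis by simp
  next
    case False then show ?thesis by (simp add: field_simps)
  qed
  finally show "((hh v)\<^sup>T * hh v) $$ (i,j) = 1\<^sub>m n $$ (i,j)" using i j by simp
qed (use hh_carrier[OF v] in auto)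

lemma hh_col0:
  assumes v: "v \<in> carrier_vec n" and n: "n > 0" and unit: "(\<Sum>k\<in>{0..<n}. (v$k)\<^sup>2) = 1"
    and i: "i < n"
  shows "hh v $$ (i,0) = v $ i"
proof -
  define s where "s = (\<Sum>k\<in>{0..<n}. (hhw v k)\<^sup>2)"
  have dv: "dim_vec v = n" using v by auto
  have Q: "hh v $$ (i,0) = (if i = 0 then 1 else 0) - 2 * hhw v i * hhw v 0 / s"
    unfolding hh_def s_def dv using i n by auto
  have "s = (\<Sum>k\<in>{0..<n}. (v$k)\<^sup>2 - (if k = 0 then 2 * v$k - 1 else 0))"
      unfolding s_def hhw_def by (rule sum.cong, auto simp: power2_eq_square algebra_simps)
  also have "\<dots> = (\<Sum>k\<in>{0..<n}. (v$k)\<^sup>2) - (\<Sum>k\<in>{0..<n}. (if k = 0 then 2 * v$k - 1 else 0))"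
    by (simp add: sum_subtractf)
  also have "\<dots> = 2 - 2 * v$0" using n unit by simp
  finally have s: "s = - 2 * hhw v 0" unfolding hhw_def by simp
  show ?thesis
  proof (cases "s = 0")
    case True
    have "\<forall>k\<in>{0..<n}. (hhw v k)\<^sup>2 = 0"
      using True unfolding s_def by (subst sum_nonneg_eq_0_iff[symmetric]) auto
    then have "hhw v i = 0" using i by auto
    then show ?thesis using Q True unfolding hhw_def by auto
  next
    case False
    then have w0: "hhw v 0 \<noteq> 0" using s by auto
    have "2 * hhw v i * hhw v 0 / s = - hhw v i" unfolding s using w0 by (simp add: field_simps)
    then have "hh v $$ (i,0) = (if i = 0 then 1 else 0) + hhw v i" using Q by simp
    then show ?thesis by (simp add: hhw_def)
  qed
qed

definition diag_of :: "real list \<Rightarrow> real mat" where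
  "diag_of ds = mat (length ds) (length ds) (\<lambda>(i,j). if i = j then ds ! i else 0)"

lemma diag_of_carrier[simp]: "diag_of ds \<in> carrier_mat (length ds) (length ds)"
  unfolding diag_of_def by auto

lemma diag_of_index: "i < length ds \<Longrightarrow> j < length ds \<Longrightarrow> diag_of ds $$ (i,j) = (if i = j then ds ! i else 0)"
  unfolding diag_of_def by auto

lemma diag_of_Cons: "diag_of (e # ds) = four_block_mat (mat 1 1 (\<lambda>_. e)) (0\<^sub>m 1 (length ds)) (0\<^sub>m (length ds) 1) (diag_of ds)"
  by (rule eq_matI) (auto simp: diag_of_def)

lemma eigs_desc_Cons:
  assumes "proots (char_poly A) = add_mset e M" and "\<forall>x\<in>#M. x \<le> e"
  shows "eigs_desc A = e # rev (sorted_list_of_multiset M)"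
proof -
  let ?L = "sorted_list_of_multiset M"
  have m: "mset (?L @ [e]) = add_mset e M" by simp
  have s: "sorted (?L @ [e])" using assms(2) by (auto simp: sorted_append)
  have "sorted_list_of_multiset (add_mset e M) = ?L @ [e]"
    by (metis m s sorted_list_of_multiset_mset sorted_sort_id)
  then show ?thesis unfolding eigs_desc_def assms(1) by simp
qed

lemma char_poly_1x1: "char_poly (mat 1 1 (\<lambda>_. e)) = [:-e, 1:]"
proof -
  have "upper_triangular (mat 1 1 (\<lambda>_. e))" by (auto simp: upper_triangular_def)
  from char_poly_upper_triangular[OF _ this, of 1] show ?thesis
    by (simp add: diag_mat_def)
qed

lemma eigs_desc_0: "A \<in> carrier_mat 0 0 \<Longrightarrow> eigs_desc A = []"
proof -
  assume A: "A \<in> carrier_mat 0 0"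
  from degree_monic_char_poly[OF A] have "char_poly A = 1"
    by (metis One_nat_def coeff_pCons_0 degree_0_id one_pCons)
  then show ?thesis unfolding eigs_desc_def by simp
qed

lemma spectral:
  fixes A :: "real mat"
  assumes "A \<in> carrier_mat n n" "A\<^sup>T = A"
  shows "\<exists>Q. Q \<in> carrier_mat n n \<and> Q\<^sup>T * Q = 1\<^sub>m n \<and> length (eigs_desc A) = n
           \<and> A = Q * diag_of (eigs_desc A) * Q\<^sup>T"
  using assms
proof (induction n arbitrary: A)
  case 0
  then have e: "eigs_desc A = []" by (simp add: eigs_desc_0)
  show ?case
    by (rule exI[of _ "1\<^sub>m 0"]) (use 0 in \<open>auto simp: e intro!: eq_matI\<close>)
next
  case (Suc n A)
  note A = Suc.prems(1) and sym = Suc.prems(2)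
  let ?cp = "char_poly A"
  have cp0: "?cp \<noteq> 0" using degree_monic_char_poly[OF A] by auto
  obtain x where "poly ?cp x = 0" using sym_real_root[OF A sym] by auto
  then have ne: "set_mset (proots ?cp) \<noteq> {}" using cp0 by auto
  define e where "e = Max (set_mset (proots ?cp))"
  have ein: "e \<in># proots ?cp" unfolding e_def using ne by (simp add: Max_in)
  have emax: "\<And>y. y \<in># proots ?cp \<Longrightarrow> y \<le> e" unfolding e_def by simp
  have "poly ?cp e = 0" using ein cp0 by simp
  then have "eigenvalue A e" using eigenvalue_root_char_poly[OF A] by simp
  then obtain v where v: "v \<in> carrier_vec (Suc n)" "v \<noteq> 0\<^sub>v (Suc n)" "A *\<^sub>v v = e \<cdot>\<^sub>v v"
    unfolding eigenvalue_def eigenvector_def using A by auto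
  define nv where "nv = (\<Sum>k\<in>{0..<Suc n}. (v$k)\<^sup>2)"
  have nvpos: "nv > 0"
  proof -
    obtain i where i: "i < Suc n" "v $ i \<noteq> 0" using v(1,2) by (metis vec_eq_iff carrier_vecD index_zero_vec(1,2))
    have "(v$i)\<^sup>2 \<le> nv" unfolding nv_def by (rule member_le_sum) (use i in auto)
    moreover have "(v$i)\<^sup>2 > 0" using i by simp
    ultimately show ?thesis by linarith
  qed
  define u where "u = (1 / sqrt nv) \<cdot>\<^sub>v v"
  have u: "u \<in> carrier_vec (Suc n)" unfolding u_def using v by auto
  have Au: "A *\<^sub>v u = e \<cdot>\<^sub>v u" unfolding u_def using v A
    by (simp add: mult_mat_vec smult_smult_assoc mult.commute)
  have unorm: "(\<Sum>k\<in>{0..<Suc n}. (u$k)\<^sup>2) = 1"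
  proof -
    have "(\<Sum>k\<in>{0..<Suc n}. (u$k)\<^sup>2) = (\<Sum>k\<in>{0..<Suc n}. (v$k)\<^sup>2 / nv)"
      unfolding u_def using v(1) nvpos by (intro sum.cong) (auto simp: power_divide)
    also have "\<dots> = 1" using nvpos unfolding nv_def by (simp add: sum_divide_distrib[symmetric])
    finally show ?thesis .
  qed
  define Q where "Q = hh u"
  have Q: "Q \<in> carrier_mat (Suc n) (Suc n)" unfolding Q_def using hh_carrier[OF u] .
  have QTQ: "Q\<^sup>T * Q = 1\<^sub>m (Suc n)" unfolding Q_def using hh_orth[OF u] .
  have QQT: "Q * Q\<^sup>T = 1\<^sub>m (Suc n)" using mat_mult_left_right_inverse[OF _ _ QTQ] Q by auto
  have colQ: "col Q 0 = u"
    using hh_col0[OF u _ unorm] Q u unfolding Q_def by (intro eq_vecI) auto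
  define B where "B = Q\<^sup>T * A * Q"
  have B: "B \<in> carrier_mat (Suc n) (Suc n)" unfolding B_def using Q A by auto
  have BT: "B\<^sup>T = B"
  proof -
    have QA: "Q\<^sup>T * A \<in> carrier_mat (Suc n) (Suc n)" using Q A by auto
    have "B\<^sup>T = Q\<^sup>T * (Q\<^sup>T * A)\<^sup>T" unfolding B_def by (rule transpose_mult[OF QA Q])
    also have "(Q\<^sup>T * A)\<^sup>T = A\<^sup>T * Q" using transpose_mult[of "Q\<^sup>T" "Suc n" "Suc n" A "Suc n"] Q A by simp
    finally show ?thesis unfolding B_def sym using Q A by (simp add: assoc_mult_mat[of _ "Suc n" "Suc n" _ "Suc n" _ "Suc n"])
  qed
  have colB: "col B 0 = e \<cdot>\<^sub>v unit_vec (Suc n) 0"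
  proof -
    have AQ: "A * Q \<in> carrier_mat (Suc n) (Suc n)" using Q A by auto
    have "col B 0 = Q\<^sup>T *\<^sub>v col (A * Q) 0" unfolding B_def using Q A
      by (simp add: col_mult2[of _ "Suc n" "Suc n" _ "Suc n"] assoc_mult_mat[of _ "Suc n" "Suc n" _ "Suc n" _ "Suc n"])
    also have "col (A * Q) 0 = A *\<^sub>v col Q 0" using col_mult2[OF A Q] by simp
    finally have "col B 0 = Q\<^sup>T *\<^sub>v (A *\<^sub>v col Q 0)" .
    also have "\<dots> = e \<cdot>\<^sub>v (Q\<^sup>T *\<^sub>v col Q 0)" unfolding colQ Au using Q u by (simp add: mult_mat_vec)
    also have "Q\<^sup>T *\<^sub>v col Q 0 = col (Q\<^sup>T * Q) 0" by (rule col_mult2[symmetric]) (use Q in auto)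
    finally show ?thesis unfolding QTQ by simp
  qed
  have Bc0: "\<And>i. i < Suc n \<Longrightarrow> B $$ (i,0) = (if i = 0 then e else 0)"
  proof -
    fix i assume i: "i < Suc n"
    have "B $$ (i,0) = col B 0 $ i" using B i by simp
    then show "B $$ (i,0) = (if i = 0 then e else 0)" unfolding colB using i by simp
  qed
  have Br0: "\<And>j. j < Suc n \<Longrightarrow> B $$ (0,j) = (if j = 0 then e else 0)"
  proof -
    fix j assume j: "j < Suc n"
    have "B $$ (0,j) = B\<^sup>T $$ (j,0)" using B j by simp
    then show "B $$ (0,j) = (if j = 0 then e else 0)" using BT Bc0[OF j] by simp
  qed
  define A' where "A' = mat n n (\<lambda>(i,j). B $$ (Suc i, Suc j))"
  have A': "A' \<in> carrier_mat n n" unfolding A'_def by auto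
  have A'T: "A'\<^sup>T = A'" unfolding A'_def
  proof (rule eq_matI)
    fix i j assume "i < dim_row (mat n n (\<lambda>(i,j). B $$ (Suc i, Suc j)))" "j < dim_col (mat n n (\<lambda>(i,j). B $$ (Suc i, Suc j)))"
    then have ij: "i < n" "j < n" by auto
    have "B $$ (Suc j, Suc i) = B\<^sup>T $$ (Suc i, Suc j)" using B ij by simp
    then show "(mat n n (\<lambda>(i,j). B $$ (Suc i, Suc j)))\<^sup>T $$ (i, j) = mat n n (\<lambda>(i,j). B $$ (Suc i, Suc j)) $$ (i, j)"
      using ij BT by simp
  qed auto
  have Bblock: "B = four_block_mat (mat 1 1 (\<lambda>_. e)) (0\<^sub>m 1 n) (0\<^sub>m n 1) A'"
  proof (rule eq_matI)
    fix i j assume "i < dim_row (four_block_mat (mat 1 1 (\<lambda>_. e)) (0\<^sub>m 1 n) (0\<^sub>m n 1) A')"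
      "j < dim_col (four_block_mat (mat 1 1 (\<lambda>_. e)) (0\<^sub>m 1 n) (0\<^sub>m n 1) A')"
    then have ij: "i < Suc n" "j < Suc n" using A' by auto
    show "B $$ (i, j) = four_block_mat (mat 1 1 (\<lambda>_. e)) (0\<^sub>m 1 n) (0\<^sub>m n 1) A' $$ (i, j)"
    proof (cases "i = 0")
      case True then show ?thesis using ij Br0 A' by simp
    next
      case False
      then show ?thesis
      proof (cases "j = 0")
        case True then show ?thesis using ij Bc0 A' by simp
      next
        case False
        with \<open>i \<noteq> 0\<close> ij show ?thesis unfolding A'_def
          by (cases i; cases j) auto
      qed
    qed
  qed (use B A' in auto)
  have AQB: "A = Q * B * Q\<^sup>T"
  proof -
    have "Q * B * Q\<^sup>T = (Q * Q\<^sup>T) * A * (Q * Q\<^sup>T)" unfolding B_def using Q A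
      by (simp add: assoc_mult_mat[of _ "Suc n" "Suc n" _ "Suc n" _ "Suc n"])
    then show ?thesis using QQT A by simp
  qed
  have "similar_mat A B"
    unfolding similar_mat_def similar_mat_wit_def Let_def
    by (rule exI[of _ Q], rule exI[of _ "Q\<^sup>T"]) (use A B Q QQT QTQ AQB in auto)
  then have "?cp = char_poly B" by (rule char_poly_similar)
  also have "\<dots> = [:-e,1:] * char_poly A'"
  proof -
    have "char_poly (four_block_mat (mat 1 1 (\<lambda>_. e)) (0\<^sub>m 1 n) (0\<^sub>m n 1) A') = char_poly (mat 1 1 (\<lambda>_. e)) * char_poly A'"
      by (rule char_poly_four_block_zeros_col) (use A' in auto)
    then show ?thesis unfolding Bblock by (simp only: char_poly_1x1)
  qed
  finally have cpA: "?cp = [:-e,1:] * char_poly A'" .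
  have cpA'0: "char_poly A' \<noteq> 0" using degree_monic_char_poly[OF A'] by auto
  have pr: "proots ?cp = add_mset e (proots (char_poly A'))"
  proof -
    have "proots ([:-e,1:] * char_poly A') = proots [:-e,1:] + proots (char_poly A')"
      by (rule proots_mult) (use cpA'0 in auto)
    then show ?thesis unfolding cpA by (simp del: mult_pCons_left)
  qed
  have le: "\<forall>x\<in>#proots (char_poly A'). x \<le> e" using emax pr by auto
  have eA: "eigs_desc A = e # eigs_desc A'"
    using eigs_desc_Cons[OF pr le] unfolding eigs_desc_def by simp
  from Suc.IH[OF A' A'T] obtain Q' where Q': "Q' \<in> carrier_mat n n" "Q'\<^sup>T * Q' = 1\<^sub>m n"
     "length (eigs_desc A') = n" "A' = Q' * diag_of (eigs_desc A') * Q'\<^sup>T" by blast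
  define ds' where "ds' = eigs_desc A'"
  define F where "F = four_block_mat (1\<^sub>m 1) (0\<^sub>m 1 n) (0\<^sub>m n 1) Q'"
  have F: "F \<in> carrier_mat (Suc n) (Suc n)" unfolding F_def using Q' by auto
  have FT: "F\<^sup>T = four_block_mat (1\<^sub>m 1) (0\<^sub>m 1 n) (0\<^sub>m n 1) Q'\<^sup>T"
  proof -
    have "F\<^sup>T = four_block_mat (1\<^sub>m 1)\<^sup>T (0\<^sub>m n 1)\<^sup>T (0\<^sub>m 1 n)\<^sup>T Q'\<^sup>T"
      unfolding F_def by (rule transpose_four_block_mat) (use Q' in auto)
    then show ?thesis by simp
  qed
  have FTF: "F\<^sup>T * F = 1\<^sub>m (Suc n)"
  proof -
    have "F\<^sup>T * F = four_block_mat (1\<^sub>m 1 * 1\<^sub>m 1 + 0\<^sub>m 1 n * 0\<^sub>m n 1) (1\<^sub>m 1 * 0\<^sub>m 1 n + 0\<^sub>m 1 n * Q')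
       (0\<^sub>m n 1 * 1\<^sub>m 1 + Q'\<^sup>T * 0\<^sub>m n 1) (0\<^sub>m n 1 * 0\<^sub>m 1 n + Q'\<^sup>T * Q')"
      unfolding FT unfolding F_def by (rule mult_four_block_mat) (use Q' in auto)
    also have "\<dots> = four_block_mat (1\<^sub>m 1) (0\<^sub>m 1 n) (0\<^sub>m n 1) (1\<^sub>m n)" using Q' by simp
    also have "\<dots> = 1\<^sub>m (Suc n)" by (rule eq_matI) auto
    finally show ?thesis .
  qed
  have D': "diag_of ds' \<in> carrier_mat n n" using Q'(3) ds'_def by (metis diag_of_carrier)
  have "B = F * four_block_mat (mat 1 1 (\<lambda>_. e)) (0\<^sub>m 1 n) (0\<^sub>m n 1) (diag_of ds') * F\<^sup>T"
  proof -
    have Fe: "F * four_block_mat (mat 1 1 (\<lambda>_. e)) (0\<^sub>m 1 n) (0\<^sub>m n 1) (diag_of ds') =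
      four_block_mat (1\<^sub>m 1 * mat 1 1 (\<lambda>_. e) + 0\<^sub>m 1 n * 0\<^sub>m n 1) (1\<^sub>m 1 * 0\<^sub>m 1 n + 0\<^sub>m 1 n * diag_of ds')
       (0\<^sub>m n 1 * mat 1 1 (\<lambda>_. e) + Q' * 0\<^sub>m n 1) (0\<^sub>m n 1 * 0\<^sub>m 1 n + Q' * diag_of ds')"
      unfolding F_def by (rule mult_four_block_mat) (use Q' D' in auto)
    also have "\<dots> = four_block_mat (mat 1 1 (\<lambda>_. e)) (0\<^sub>m 1 n) (0\<^sub>m n 1) (Q' * diag_of ds')"
      using Q' D' by simp
    finally have Fe: "F * four_block_mat (mat 1 1 (\<lambda>_. e)) (0\<^sub>m 1 n) (0\<^sub>m n 1) (diag_of ds') =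
       four_block_mat (mat 1 1 (\<lambda>_. e)) (0\<^sub>m 1 n) (0\<^sub>m n 1) (Q' * diag_of ds')" .
    have QD: "Q' * diag_of ds' \<in> carrier_mat n n" using Q' D' by auto
    have A'eq: "A' = Q' * diag_of ds' * Q'\<^sup>T" using Q'(4) unfolding ds'_def .
    have z: "(Q' * diag_of ds') * 0\<^sub>m n 1 = 0\<^sub>m n 1" using right_mult_zero_mat[OF QD] by simp
    have "four_block_mat (mat 1 1 (\<lambda>_. e)) (0\<^sub>m 1 n) (0\<^sub>m n 1) (Q' * diag_of ds') * F\<^sup>T =
      four_block_mat (mat 1 1 (\<lambda>_. e) * 1\<^sub>m 1 + 0\<^sub>m 1 n * 0\<^sub>m n 1) (mat 1 1 (\<lambda>_. e) * 0\<^sub>m 1 n + 0\<^sub>m 1 n * Q'\<^sup>T)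
       (0\<^sub>m n 1 * 1\<^sub>m 1 + (Q' * diag_of ds') * 0\<^sub>m n 1) (0\<^sub>m n 1 * 0\<^sub>m 1 n + (Q' * diag_of ds') * Q'\<^sup>T)"
      unfolding FT by (rule mult_four_block_mat) (use Q' QD in auto)
    also have "\<dots> = B"
      unfolding Bblock z using Q' QD A'eq by simp
    finally show ?thesis using Fe by simp
  qed
  also have "four_block_mat (mat 1 1 (\<lambda>_. e)) (0\<^sub>m 1 n) (0\<^sub>m n 1) (diag_of ds') = diag_of (eigs_desc A)"
    unfolding eA diag_of_Cons ds'_def using Q'(3) by simp
  finally have BF: "B = F * diag_of (eigs_desc A) * F\<^sup>T" .
  have lenA: "length (eigs_desc A) = Suc n" using eA Q'(3) by simp
  have DA: "diag_of (eigs_desc A) \<in> carrier_mat (Suc n) (Suc n)" using lenA by (metis diag_of_carrier)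
  show ?case
  proof (intro exI[of _ "Q * F"] conjI)
    show "Q * F \<in> carrier_mat (Suc n) (Suc n)" using Q F by auto
    show "(Q * F)\<^sup>T * (Q * F) = 1\<^sub>m (Suc n)"
    proof -
      have "(Q * F)\<^sup>T * (Q * F) = F\<^sup>T * ((Q\<^sup>T * Q) * F)"
        using Q F by (simp add: transpose_mult[of _ "Suc n" "Suc n" _ "Suc n"] assoc_mult_mat[of _ "Suc n" "Suc n" _ "Suc n" _ "Suc n"])
      then show ?thesis using QTQ FTF F by simp
    qed
    show "length (eigs_desc A) = Suc n" by (rule lenA)
    define DD where "DD = diag_of (eigs_desc A)"
    have DD: "DD \<in> carrier_mat (Suc n) (Suc n)" using DA DD_def by simp
    have BF': "B = F * DD * F\<^sup>T" using BF DD_def by simp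
    have "A = Q * (F * DD * F\<^sup>T) * Q\<^sup>T" using AQB unfolding BF' .
    then have "A = Q * F * DD * (Q * F)\<^sup>T" using Q F DD
      by (simp add: transpose_mult[of _ "Suc n" "Suc n" _ "Suc n"] assoc_mult_mat[of _ "Suc n" "Suc n" _ "Suc n" _ "Suc n"])
    then show "A = Q * F * diag_of (eigs_desc A) * (Q * F)\<^sup>T" unfolding DD_def .
  qed
qed

lemma sqn_nonneg: "0 \<le> (v::real vec) \<bullet> v"
  unfolding scalar_prod_def by (intro sum_nonneg) auto

lemma sqn_pos: "(v::real vec) \<in> carrier_vec n \<Longrightarrow> v \<noteq> 0\<^sub>v n \<Longrightarrow> 0 < v \<bullet> v"
proof -
  assume v: "v \<in> carrier_vec n" "v \<noteq> 0\<^sub>v n"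
  obtain i where i: "i < n" "v $ i \<noteq> 0" using v by (metis vec_eq_iff carrier_vecD index_zero_vec(1,2))
  have "v $ i * v $ i \<le> v \<bullet> v" unfolding scalar_prod_def
    by (rule member_le_sum) (use i v in auto)
  moreover have "(v $ i)\<^sup>2 > 0" using i by simp
  then have "v $ i * v $ i > 0" by (simp add: power2_eq_square)
  ultimately show ?thesis by linarith
qed

lemma smult_mat_vec: "v \<in> carrier_vec (dim_col A) \<Longrightarrow> ((k::real) \<cdot>\<^sub>m A) *\<^sub>v v = k \<cdot>\<^sub>v (A *\<^sub>v v)"
  by (rule eq_vecI) (auto simp: scalar_prod_def sum_distrib_left mult.assoc intro!: sum.cong)

lemma sq_lower_transpose:
  fixes M :: "real mat"
  assumes M: "M \<in> carrier_mat p p" and a: "a > 0"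
    and low: "\<And>c. c \<in> carrier_vec p \<Longrightarrow> a * (c \<bullet> c) \<le> (M *\<^sub>v c) \<bullet> (M *\<^sub>v c)"
    and x: "x \<in> carrier_vec p"
  shows "a * (x \<bullet> x) \<le> (M\<^sup>T *\<^sub>v x) \<bullet> (M\<^sup>T *\<^sub>v x)"
proof -
  have "det M \<noteq> 0"
  proof
    assume "det M = 0"
    then obtain c where c: "c \<in> carrier_vec p" "c \<noteq> 0\<^sub>v p" "M *\<^sub>v c = 0\<^sub>v p"
      using det_0_iff_vec_prod_zero[OF M] by auto
    have "a * (c \<bullet> c) > 0" using a sqn_pos[OF c(1,2)] by simp
    moreover have "(M *\<^sub>v c) \<bullet> (M *\<^sub>v c) = 0" using c(3) by simp
    ultimately show False using low[OF c(1)] by linarith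
  qed
  define c where "c = (1 / det M) \<cdot>\<^sub>v (adj_mat M *\<^sub>v x)"
  have c: "c \<in> carrier_vec p" unfolding c_def using adj_mat(1)[OF M] x by auto
  have Mc: "M *\<^sub>v c = x"
  proof -
    have "M *\<^sub>v c = (1 / det M) \<cdot>\<^sub>v ((M * adj_mat M) *\<^sub>v x)"
      unfolding c_def using M adj_mat(1)[OF M] x
      by (simp add: mult_mat_vec assoc_mult_mat_vec[of _ p p _ p])
    also have "\<dots> = x" unfolding adj_mat(2)[OF M] using x \<open>det M \<noteq> 0\<close>
      by (simp add: smult_mat_vec smult_smult_assoc) 
    finally show ?thesis .
  qed
  define w where "w = M\<^sup>T *\<^sub>v x"
  have w: "w \<in> carrier_vec p" unfolding w_def using M x by auto
  have xx: "x \<bullet> x = c \<bullet> w"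
  proof -
    have "c \<bullet> w = w \<bullet> c" using c w by (simp add: comm_scalar_prod)
    also have "\<dots> = x \<bullet> (M *\<^sub>v c)" unfolding w_def by (rule transpose_vec_mult_scalar[OF M c x])
    finally show ?thesis using Mc by simp
  qed
  have amgm: "2 * (c \<bullet> w) \<le> a * (c \<bullet> c) + (w \<bullet> w) / a"
  proof -
    have "a * (c \<bullet> c) + (w \<bullet> w) / a - 2 * (c \<bullet> w) = (\<Sum>i\<in>{0..<p}. a * (c$i * c$i) + (w$i * w$i) / a - 2 * (c$i * w$i))"
      using c w unfolding scalar_prod_def by (simp add: sum.distrib sum_subtractf sum_distrib_left sum_divide_distrib)
    also have "\<dots> \<ge> 0"
    proof (intro sum_nonneg)
      fix i
      have "a * (c$i * c$i) + (w$i * w$i) / a - 2 * (c$i * w$i) = (a * c$i - w$i)\<^sup>2 / a"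
        using a by (simp add: field_simps power2_eq_square)
      then show "a * (c$i * c$i) + (w$i * w$i) / a - 2 * (c$i * w$i) \<ge> 0" using a by simp
    qed
    finally show ?thesis by linarith
  qed
  have "a * (c \<bullet> c) \<le> x \<bullet> x" using low[OF c] Mc by simp
  then have "2 * (x \<bullet> x) \<le> x \<bullet> x + (w \<bullet> w) / a" using amgm xx by linarith
  then have "x \<bullet> x \<le> (w \<bullet> w) / a" by linarith
  then show ?thesis using a unfolding w_def by (simp add: field_simps)
qed

lemma wide_kernel:
  fixes R :: "real mat"
  assumes R: "R \<in> carrier_mat q K" and qK: "q < K"
  shows "\<exists>c. c \<in> carrier_vec K \<and> c \<noteq> 0\<^sub>v K \<and> R *\<^sub>v c = 0\<^sub>v q"
proof (cases "q = 0")
  case True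
  have u1: "unit_vec K 0 $ 0 = (1::real)" using qK by simp
  have "unit_vec K 0 \<noteq> (0\<^sub>v K :: real vec)"
  proof
    assume "unit_vec K 0 = (0\<^sub>v K :: real vec)"
    then have "unit_vec K 0 $ 0 = (0\<^sub>v K :: real vec) $ 0" by simp
    then show False using u1 qK by simp
  qed
  moreover have "R *\<^sub>v unit_vec K 0 = 0\<^sub>v q" using True R by (intro eq_vecI) auto
  ultimately show ?thesis by (intro exI[of _ "unit_vec K 0"]) auto
next
  case False
  define P where "P = mat K K (\<lambda>(i,j). if i < q then R $$ (i,j) else R $$ (0,j))"
  have P: "P \<in> carrier_mat K K" unfolding P_def by auto
  have "row P 0 = row P q" unfolding P_def using qK False by (intro eq_vecI) auto
  then have "det P = 0" using det_identical_rows[OF P, of 0 q] False qK by auto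
  then obtain c where c: "c \<in> carrier_vec K" "c \<noteq> 0\<^sub>v K" "P *\<^sub>v c = 0\<^sub>v K"
    using det_0_iff_vec_prod_zero[OF P] by auto
  have "R *\<^sub>v c = 0\<^sub>v q"
  proof (rule eq_vecI)
    fix i assume "i < dim_vec (0\<^sub>v q)"
    then have i: "i < q" by simp
    have "(P *\<^sub>v c) $ i = 0" using c(3) i qK by simp
    moreover have "(P *\<^sub>v c) $ i = (R *\<^sub>v c) $ i"
    proof -
      have "(P *\<^sub>v c) $ i = row P i \<bullet> c" using P i qK by simp
      also have "row P i = row R i" unfolding P_def using i qK R by (intro eq_vecI) auto
      also have "row R i \<bullet> c = (R *\<^sub>v c) $ i" using R i by simp
      finally show ?thesis .
    qed
    ultimately show "(R *\<^sub>v c) $ i = 0\<^sub>v q $ i" using i by simp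
  qed (use R in auto)
  then show ?thesis using c by auto
qed

lemma quad_AB:
  fixes A B :: "real mat"
  assumes A: "A \<in> carrier_mat p h" and B: "B \<in> carrier_mat q h" and y: "y \<in> carrier_vec h"
  shows "y \<bullet> ((A\<^sup>T * A - B\<^sup>T * B) *\<^sub>v y) = (A *\<^sub>v y) \<bullet> (A *\<^sub>v y) - (B *\<^sub>v y) \<bullet> (B *\<^sub>v y)"
proof -
  have "(A\<^sup>T * A - B\<^sup>T * B) *\<^sub>v y = A\<^sup>T *\<^sub>v (A *\<^sub>v y) - B\<^sup>T *\<^sub>v (B *\<^sub>v y)"
  proof -
    have AA: "A\<^sup>T * A \<in> carrier_mat h h" and BB: "B\<^sup>T * B \<in> carrier_mat h h" using A B by auto
    have "(A\<^sup>T * A - B\<^sup>T * B) *\<^sub>v y = (A\<^sup>T * A) *\<^sub>v y - (B\<^sup>T * B) *\<^sub>v y"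
      by (rule minus_mult_distrib_mat_vec[OF AA BB y])
    also have "(A\<^sup>T * A) *\<^sub>v y = A\<^sup>T *\<^sub>v (A *\<^sub>v y)"
      by (rule assoc_mult_mat_vec) (use A y in auto)
    also have "(B\<^sup>T * B) *\<^sub>v y = B\<^sup>T *\<^sub>v (B *\<^sub>v y)"
      by (rule assoc_mult_mat_vec) (use B y in auto)
    finally show ?thesis .
  qed
  then have "y \<bullet> ((A\<^sup>T * A - B\<^sup>T * B) *\<^sub>v y) = y \<bullet> (A\<^sup>T *\<^sub>v (A *\<^sub>v y) - B\<^sup>T *\<^sub>v (B *\<^sub>v y))"
    by simp
  also have "\<dots> = y \<bullet> (A\<^sup>T *\<^sub>v (A *\<^sub>v y)) - y \<bullet> (B\<^sup>T *\<^sub>v (B *\<^sub>v y))"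
    by (rule scalar_prod_minus_distrib[of _ h]) (use A B y in auto)
  also have "y \<bullet> (A\<^sup>T *\<^sub>v (A *\<^sub>v y)) = (A *\<^sub>v y) \<bullet> (A *\<^sub>v y)"
    using transpose_vec_mult_scalar[OF A y, of "A *\<^sub>v y"] A y by (simp add: comm_scalar_prod[of _ h])
  also have "y \<bullet> (B\<^sup>T *\<^sub>v (B *\<^sub>v y)) = (B *\<^sub>v y) \<bullet> (B *\<^sub>v y)"
    using transpose_vec_mult_scalar[OF B y, of "B *\<^sub>v y"] B y by (simp add: comm_scalar_prod[of _ h])
  finally show ?thesis .
qed

lemma quad_diag:
  fixes Q L :: "real mat"
  assumes Q: "Q \<in> carrier_mat h h" and QTQ: "Q\<^sup>T * Q = 1\<^sub>m h" and len: "length ds = h"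
    and L: "L = Q * diag_of ds * Q\<^sup>T" and c: "c \<in> carrier_vec h"
  shows "(Q *\<^sub>v c) \<bullet> (L *\<^sub>v (Q *\<^sub>v c)) = (\<Sum>i\<in>{0..<h}. ds ! i * (c $ i)\<^sup>2)"
proof -
  have D: "diag_of ds \<in> carrier_mat h h" using len by (metis diag_of_carrier)
  have "L *\<^sub>v (Q *\<^sub>v c) = Q *\<^sub>v (diag_of ds *\<^sub>v ((Q\<^sup>T * Q) *\<^sub>v c))"
    unfolding L using Q D c
    by (simp add: assoc_mult_mat_vec[of _ h h _ h] assoc_mult_mat[of _ h h _ h _ h])
  also have "\<dots> = Q *\<^sub>v (diag_of ds *\<^sub>v c)" unfolding QTQ using c by simp
  finally have e: "L *\<^sub>v (Q *\<^sub>v c) = Q *\<^sub>v (diag_of ds *\<^sub>v c)" .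
  have Dc: "diag_of ds *\<^sub>v c \<in> carrier_vec h" using D c by auto
  have "(Q *\<^sub>v c) \<bullet> (Q *\<^sub>v (diag_of ds *\<^sub>v c)) = (Q\<^sup>T *\<^sub>v (Q *\<^sub>v c)) \<bullet> (diag_of ds *\<^sub>v c)"
    using transpose_vec_mult_scalar[OF Q Dc, of "Q *\<^sub>v c"] Q c by simp
  also have "Q\<^sup>T *\<^sub>v (Q *\<^sub>v c) = c" using Q c QTQ by (simp add: assoc_mult_mat_vec[symmetric, of _ h h _ h])
  also have "c \<bullet> (diag_of ds *\<^sub>v c) = (\<Sum>i\<in>{0..<h}. ds ! i * (c $ i)\<^sup>2)"
  proof -
    have "\<And>i. i < h \<Longrightarrow> (diag_of ds *\<^sub>v c) $ i = ds ! i * c $ i"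
    proof -
      fix i assume i: "i < h"
      have "(diag_of ds *\<^sub>v c) $ i = (\<Sum>j\<in>{0..<h}. (if i = j then ds ! i else 0) * c $ j)"
        using i D c len by (auto simp: scalar_prod_def diag_of_index intro!: sum.cong)
      also have "\<dots> = (\<Sum>j\<in>{0..<h}. if i = j then ds ! i * c $ j else 0)" by (rule sum.cong) auto
      also have "\<dots> = ds ! i * c $ i" using i by simp
      finally show "(diag_of ds *\<^sub>v c) $ i = ds ! i * c $ i" .
    qed
    note rw = this
    have dimDc: "dim_vec (diag_of ds *\<^sub>v c) = h" using D by auto
    show ?thesis unfolding scalar_prod_def dimDc
      by (intro sum.cong) (auto simp: rw power2_eq_square mult_ac)
  qed
  finally show ?thesis using e by simp
qed

lemma sum_if_less: "(p::nat) \<le> h \<Longrightarrow> (\<Sum>j\<in>{0..<h}. if j < p then f j else 0) = (\<Sum>j\<in>{0..<p}. f j)"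
  by (rule sum.mono_neutral_cong_right) auto

lemma Lam_carrier_sym:
  fixes A B :: "real mat"
  assumes A: "A \<in> carrier_mat p h" and B: "B \<in> carrier_mat q h"
  shows "A\<^sup>T * A - B\<^sup>T * B \<in> carrier_mat h h" "(A\<^sup>T * A - B\<^sup>T * B)\<^sup>T = A\<^sup>T * A - B\<^sup>T * B"
proof -
  show "A\<^sup>T * A - B\<^sup>T * B \<in> carrier_mat h h" using A B by auto
  have AA: "A\<^sup>T * A \<in> carrier_mat h h" and BB: "B\<^sup>T * B \<in> carrier_mat h h" using A B by auto
  have "(A\<^sup>T * A)\<^sup>T = A\<^sup>T * A" using transpose_mult[of "A\<^sup>T" h p A h] A by simp
  moreover have "(B\<^sup>T * B)\<^sup>T = B\<^sup>T * B" using transpose_mult[of "B\<^sup>T" h q B h] B by simp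
  ultimately show "(A\<^sup>T * A - B\<^sup>T * B)\<^sup>T = A\<^sup>T * A - B\<^sup>T * B"
    using transpose_minus[OF AA BB] by simp
qed

lemma orth_norm:
  fixes Q :: "real mat"
  assumes Q: "Q \<in> carrier_mat h h" and QTQ: "Q\<^sup>T * Q = 1\<^sub>m h" and v: "v \<in> carrier_vec h"
  shows "(Q\<^sup>T *\<^sub>v v) \<bullet> (Q\<^sup>T *\<^sub>v v) = v \<bullet> v"
proof -
  have QQT: "Q * Q\<^sup>T = 1\<^sub>m h" using mat_mult_left_right_inverse[OF _ _ QTQ] Q by auto
  have QTv: "Q\<^sup>T *\<^sub>v v \<in> carrier_vec h" using Q v by auto
  have "(Q\<^sup>T *\<^sub>v v) \<bullet> (Q\<^sup>T *\<^sub>v v) = v \<bullet> (Q *\<^sub>v (Q\<^sup>T *\<^sub>v v))"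
    by (rule transpose_vec_mult_scalar[OF Q QTv v])
  also have "Q *\<^sub>v (Q\<^sup>T *\<^sub>v v) = (Q * Q\<^sup>T) *\<^sub>v v"
    by (rule assoc_mult_mat_vec[symmetric]) (use Q v in auto)
  finally show ?thesis using QQT v by simp
qed

lemma eig_lower:
  fixes A B :: "real mat"
  assumes A: "A \<in> carrier_mat p h" and B: "B \<in> carrier_mat q h"
    and pos: "0 < lam (A\<^sup>T * A - B\<^sup>T * B) p" and x: "x \<in> carrier_vec p"
  shows "lam (A\<^sup>T * A - B\<^sup>T * B) p * (x \<bullet> x) \<le> (A\<^sup>T *\<^sub>v x) \<bullet> (A\<^sup>T *\<^sub>v x)"
proof -
  define L where "L = A\<^sup>T * A - B\<^sup>T * B"
  define a where "a = lam L p"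
  note Lcs = Lam_carrier_sym[OF A B, folded L_def]
  obtain Q where Q: "Q \<in> carrier_mat h h" and QTQ: "Q\<^sup>T * Q = 1\<^sub>m h"
    and len: "length (eigs_desc L) = h" and Leq: "L = Q * diag_of (eigs_desc L) * Q\<^sup>T"
    using spectral[OF Lcs] by blast
  define ds where "ds = eigs_desc L"
  have apos: "0 < a" using pos unfolding a_def L_def .
  have p: "1 \<le> p" "p \<le> h" and a_eq: "a = ds ! (p - 1)"
    using apos len unfolding a_def lam_def ds_def by (auto split: if_splits)
  have srt: "sorted (rev ds)" unfolding ds_def eigs_desc_def by simp
  have dsge: "\<And>i. i < p \<Longrightarrow> a \<le> ds ! i"
    unfolding a_eq using sorted_rev_nth_mono[OF srt] p len ds_def by auto
  define W where "W = A * Q"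
  have W: "W \<in> carrier_mat p h" unfolding W_def using A Q by auto
  define M where "M = mat p p (\<lambda>(i,j). W $$ (i,j))"
  have M: "M \<in> carrier_mat p p" unfolding M_def by auto
  have low: "a * (c \<bullet> c) \<le> (M *\<^sub>v c) \<bullet> (M *\<^sub>v c)" if c: "c \<in> carrier_vec p" for c
  proof -
    define z where "z = vec h (\<lambda>i. if i < p then c $ i else 0)"
    have z: "z \<in> carrier_vec h" unfolding z_def by auto
    define y where "y = Q *\<^sub>v z"
    have y: "y \<in> carrier_vec h" unfolding y_def using Q z by auto
    have Ay: "A *\<^sub>v y = M *\<^sub>v c"
    proof -
      have "A *\<^sub>v y = W *\<^sub>v z" unfolding y_def W_def
        by (rule assoc_mult_mat_vec[symmetric]) (use A Q z in auto)
      also have "\<dots> = M *\<^sub>v c"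
      proof (rule eq_vecI)
        fix i assume "i < dim_vec (M *\<^sub>v c)"
        then have i: "i < p" using M by simp
        have "(W *\<^sub>v z) $ i = (\<Sum>j\<in>{0..<h}. W $$ (i,j) * z $ j)"
          using W z i by (simp add: scalar_prod_def)
        also have "\<dots> = (\<Sum>j\<in>{0..<h}. if j < p then W $$ (i,j) * c $ j else 0)"
          unfolding z_def by (rule sum.cong) auto
        also have "\<dots> = (\<Sum>j\<in>{0..<p}. W $$ (i,j) * c $ j)" by (rule sum_if_less[OF p(2)])
        also have "\<dots> = (M *\<^sub>v c) $ i" using M c i unfolding M_def by (simp add: scalar_prod_def)
        finally show "(W *\<^sub>v z) $ i = (M *\<^sub>v c) $ i" .
      qed (use W M in auto)
      finally show ?thesis .
    qed
    have "y \<bullet> (L *\<^sub>v y) = (\<Sum>i\<in>{0..<h}. ds ! i * (z $ i)\<^sup>2)"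
      unfolding y_def ds_def by (rule quad_diag[OF Q QTQ len Leq z])
    also have "\<dots> = (\<Sum>i\<in>{0..<h}. if i < p then ds ! i * (c $ i)\<^sup>2 else 0)"
      unfolding z_def by (rule sum.cong) auto
    also have "\<dots> = (\<Sum>i\<in>{0..<p}. ds ! i * (c $ i)\<^sup>2)" by (rule sum_if_less[OF p(2)])
    also have "\<dots> \<ge> (\<Sum>i\<in>{0..<p}. a * (c $ i)\<^sup>2)"
      by (rule sum_mono) (use dsge in \<open>auto intro: mult_right_mono\<close>)
    finally have ge: "(\<Sum>i\<in>{0..<p}. a * (c $ i)\<^sup>2) \<le> y \<bullet> (L *\<^sub>v y)" .
    have "(\<Sum>i\<in>{0..<p}. a * (c $ i)\<^sup>2) = a * (c \<bullet> c)"
      using c unfolding scalar_prod_def by (simp add: sum_distrib_left power2_eq_square)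
    moreover have "y \<bullet> (L *\<^sub>v y) = (A *\<^sub>v y) \<bullet> (A *\<^sub>v y) - (B *\<^sub>v y) \<bullet> (B *\<^sub>v y)"
      unfolding L_def by (rule quad_AB[OF A B y])
    moreover have "0 \<le> (B *\<^sub>v y) \<bullet> (B *\<^sub>v y)" by (rule sqn_nonneg)
    moreover have "(A *\<^sub>v y) \<bullet> (A *\<^sub>v y) = (M *\<^sub>v c) \<bullet> (M *\<^sub>v c)" using Ay by simp
    ultimately show ?thesis using ge by linarith
  qed
  have "a * (x \<bullet> x) \<le> (M\<^sup>T *\<^sub>v x) \<bullet> (M\<^sup>T *\<^sub>v x)"
    by (rule sq_lower_transpose[OF M apos low x])
  also have "\<dots> \<le> (W\<^sup>T *\<^sub>v x) \<bullet> (W\<^sup>T *\<^sub>v x)"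
  proof -
    have e: "\<And>k. k < p \<Longrightarrow> (M\<^sup>T *\<^sub>v x) $ k = (W\<^sup>T *\<^sub>v x) $ k"
    proof -
      fix k assume k: "k < p"
      have "(M\<^sup>T *\<^sub>v x) $ k = (\<Sum>i\<in>{0..<p}. W $$ (i,k) * x $ i)"
        using M x k unfolding M_def by (simp add: scalar_prod_def)
      also have "\<dots> = (W\<^sup>T *\<^sub>v x) $ k"
        using W x k p by (simp add: scalar_prod_def)
      finally show "(M\<^sup>T *\<^sub>v x) $ k = (W\<^sup>T *\<^sub>v x) $ k" .
    qed
    have "(M\<^sup>T *\<^sub>v x) \<bullet> (M\<^sup>T *\<^sub>v x) = (\<Sum>k\<in>{0..<p}. ((W\<^sup>T *\<^sub>v x) $ k)\<^sup>2)"
    proof -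
      have "dim_vec (M\<^sup>T *\<^sub>v x) = p" using M by simp
      then show ?thesis unfolding scalar_prod_def by (intro sum.cong) (auto simp del: index_mult_mat_vec simp: e power2_eq_square)
    qed
    also have "\<dots> \<le> (\<Sum>k\<in>{0..<h}. ((W\<^sup>T *\<^sub>v x) $ k)\<^sup>2)"
      by (rule sum_mono2) (use p in auto)
    also have "\<dots> = (W\<^sup>T *\<^sub>v x) \<bullet> (W\<^sup>T *\<^sub>v x)"
      using W unfolding scalar_prod_def by (simp add: power2_eq_square)
    finally show ?thesis .
  qed
  also have "W\<^sup>T *\<^sub>v x = Q\<^sup>T *\<^sub>v (A\<^sup>T *\<^sub>v x)"
  proof -
    have "W\<^sup>T = Q\<^sup>T * A\<^sup>T" unfolding W_def by (rule transpose_mult[OF A Q])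
    then show ?thesis using A Q x by (simp add: assoc_mult_mat_vec[of _ h p _ p])
  qed
  also have "(Q\<^sup>T *\<^sub>v (A\<^sup>T *\<^sub>v x)) \<bullet> (Q\<^sup>T *\<^sub>v (A\<^sup>T *\<^sub>v x)) = (A\<^sup>T *\<^sub>v x) \<bullet> (A\<^sup>T *\<^sub>v x)"
    by (rule orth_norm[OF Q QTQ]) (use A x in auto)
  finally show ?thesis unfolding a_def L_def .
qed

lemma eig_nonneg:
  fixes A B :: "real mat"
  assumes A: "A \<in> carrier_mat p h" and B: "B \<in> carrier_mat q h" and pqh: "p + q \<le> h"
  shows "0 \<le> lam (A\<^sup>T * A - B\<^sup>T * B) p"
proof (rule ccontr)
  assume neg: "\<not> 0 \<le> lam (A\<^sup>T * A - B\<^sup>T * B) p"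
  define L where "L = A\<^sup>T * A - B\<^sup>T * B"
  define a where "a = lam L p"
  note Lcs = Lam_carrier_sym[OF A B, folded L_def]
  obtain Q where Q: "Q \<in> carrier_mat h h" and QTQ: "Q\<^sup>T * Q = 1\<^sub>m h"
    and len: "length (eigs_desc L) = h" and Leq: "L = Q * diag_of (eigs_desc L) * Q\<^sup>T"
    using spectral[OF Lcs] by blast
  define ds where "ds = eigs_desc L"
  have aneg: "a < 0" using neg unfolding a_def L_def by simp
  have p: "1 \<le> p" "p \<le> h" and a_eq: "a = ds ! (p - 1)"
    using aneg len unfolding a_def lam_def ds_def by (auto split: if_splits)
  have srt: "sorted (rev ds)" unfolding ds_def eigs_desc_def by simp
  have dsle: "\<And>i. p - 1 \<le> i \<Longrightarrow> i < h \<Longrightarrow> ds ! i \<le> a"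
    unfolding a_eq using sorted_rev_nth_mono[OF srt] len ds_def by auto
  define K where "K = h - (p - 1)"
  have qK: "q < K" unfolding K_def using pqh p by auto
  define R where "R = B * Q"
  have R: "R \<in> carrier_mat q h" unfolding R_def using B Q by auto
  define R' where "R' = mat q K (\<lambda>(i,j). R $$ (i, j + (p - 1)))"
  have R': "R' \<in> carrier_mat q K" unfolding R'_def by auto
  obtain c where c: "c \<in> carrier_vec K" "c \<noteq> 0\<^sub>v K" "R' *\<^sub>v c = 0\<^sub>v q"
    using wide_kernel[OF R' qK] by blast
  define z where "z = vec h (\<lambda>i. if p - 1 \<le> i then c $ (i - (p - 1)) else 0)"
  have z: "z \<in> carrier_vec h" unfolding z_def by auto
  define y where "y = Q *\<^sub>v z"
  have y: "y \<in> carrier_vec h" unfolding y_def using Q z by auto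
  have shift: "(\<Sum>j\<in>{0..<h}. if p - 1 \<le> j then f (j - (p - 1)) else 0) = (\<Sum>k\<in>{0..<K}. f k)" for f :: "nat \<Rightarrow> real"
  proof -
    have "(\<Sum>j\<in>{0..<h}. if p - 1 \<le> j then f (j - (p - 1)) else 0) = (\<Sum>j\<in>{p - 1..<h}. f (j - (p - 1)))"
      by (rule sum.mono_neutral_cong_right) auto
    also have "{p - 1..<h} = {0 + (p - 1)..<K + (p - 1)}" unfolding K_def using p by auto
    also have "(\<Sum>j\<in>{0 + (p - 1)..<K + (p - 1)}. f (j - (p - 1))) = (\<Sum>k\<in>{0..<K}. f k)"
      by (subst sum.shift_bounds_nat_ivl) simp
    finally show ?thesis .
  qed
  have By: "B *\<^sub>v y = 0\<^sub>v q"
  proof -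
    have "B *\<^sub>v y = R *\<^sub>v z" unfolding y_def R_def
      by (rule assoc_mult_mat_vec[symmetric]) (use B Q z in auto)
    also have "\<dots> = R' *\<^sub>v c"
    proof (rule eq_vecI)
      fix i assume "i < dim_vec (R' *\<^sub>v c)"
      then have i: "i < q" using R' by simp
      have "(R *\<^sub>v z) $ i = (\<Sum>j\<in>{0..<h}. R $$ (i,j) * z $ j)"
        using R z i by (simp add: scalar_prod_def)
      also have "\<dots> = (\<Sum>j\<in>{0..<h}. if p - 1 \<le> j then R $$ (i, (j - (p - 1)) + (p - 1)) * c $ (j - (p - 1)) else 0)"
        unfolding z_def by (rule sum.cong) auto
      also have "\<dots> = (\<Sum>k\<in>{0..<K}. R $$ (i, k + (p - 1)) * c $ k)" by (rule shift)
      also have "\<dots> = (R' *\<^sub>v c) $ i" using R' c(1) i unfolding R'_def by (simp add: scalar_prod_def)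
      finally show "(R *\<^sub>v z) $ i = (R' *\<^sub>v c) $ i" .
    qed (use R R' in auto)
    finally show ?thesis using c(3) by simp
  qed
  have "y \<bullet> (L *\<^sub>v y) = (A *\<^sub>v y) \<bullet> (A *\<^sub>v y) - (B *\<^sub>v y) \<bullet> (B *\<^sub>v y)"
    unfolding L_def by (rule quad_AB[OF A B y])
  then have ge0: "0 \<le> y \<bullet> (L *\<^sub>v y)" using By sqn_nonneg[of "A *\<^sub>v y"] by simp
  have "y \<bullet> (L *\<^sub>v y) = (\<Sum>i\<in>{0..<h}. ds ! i * (z $ i)\<^sup>2)"
    unfolding y_def ds_def by (rule quad_diag[OF Q QTQ len Leq z])
  also have "\<dots> \<le> (\<Sum>i\<in>{0..<h}. a * (z $ i)\<^sup>2)"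
  proof (rule sum_mono)
    fix i assume "i \<in> {0..<h}"
    then show "ds ! i * (z $ i)\<^sup>2 \<le> a * (z $ i)\<^sup>2"
      using dsle[of i] unfolding z_def by (cases "p - 1 \<le> i") (auto intro: mult_right_mono)
  qed
  also have "\<dots> = a * (\<Sum>i\<in>{0..<h}. (z $ i)\<^sup>2)" by (simp add: sum_distrib_left)
  also have "\<dots> < 0"
  proof -
    obtain k where k: "k < K" "c $ k \<noteq> 0" using c(1,2) by (metis vec_eq_iff carrier_vecD index_zero_vec(1,2))
    have kh: "k + (p - 1) < h" using k p unfolding K_def by auto
    have zk: "z $ (k + (p - 1)) = c $ k" unfolding z_def using kh by simp
    have "(z $ (k + (p - 1)))\<^sup>2 \<le> (\<Sum>i\<in>{0..<h}. (z $ i)\<^sup>2)"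
      by (rule member_le_sum) (use kh in auto)
    moreover have "(z $ (k + (p - 1)))\<^sup>2 > 0" using zk k by simp
    ultimately have "(\<Sum>i\<in>{0..<h}. (z $ i)\<^sup>2) > 0" by linarith
    then show ?thesis using aneg by (simp add: mult_neg_pos)
  qed
  finally show False using ge0 by linarith
qed

lemma proots_lin_prod: "proots (\<Prod>a\<leftarrow>xs. [:- a, 1:]) = mset (xs :: real list)"
proof (induction xs)
  case Nil then show ?case by simp
next
  case (Cons x xs)
  have nz: "(\<Prod>a\<leftarrow>xs. [:- a, 1:]) \<noteq> (0 :: real poly)"
    by (auto simp: prod_list_zero_iff)
  have "proots (\<Prod>a\<leftarrow>x # xs. [:- a, 1:]) = proots [:-x, 1:] + proots (\<Prod>a\<leftarrow>xs. [:- a, 1:])"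
    using nz by (simp del: mult_pCons_left add: proots_mult)
  then show ?case using Cons by simp
qed

lemma lam_diag:
  fixes Sx :: "real mat"
  assumes Sx: "Sx \<in> carrier_mat r r" and dg: "diagonal_mat Sx" and pos: "\<forall>i<r. Sx $$ (i,i) > 0"
    and r: "r \<ge> 1"
  shows "0 < lam Sx r" "\<And>i. i < r \<Longrightarrow> lam Sx r \<le> Sx $$ (i,i)"
proof -
  have ut: "upper_triangular Sx" using dg Sx unfolding diagonal_mat_def upper_triangular_def by auto
  define dl where "dl = diag_mat Sx"
  have cp: "char_poly Sx = (\<Prod>a\<leftarrow>dl. [:- a, 1:])" unfolding dl_def by (rule char_poly_upper_triangular[OF Sx ut])
  have ldl: "length dl = r" unfolding dl_def diag_mat_def using Sx by simp
  have e: "eigs_desc Sx = rev (sort dl)" unfolding eigs_desc_def cp proots_lin_prod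
    by (simp add: sorted_list_of_multiset_mset)
  have ls: "length (sort dl) = r" using ldl by simp
  have lamv: "lam Sx r = sort dl ! 0"
    unfolding lam_def e using r ls by (simp add: rev_nth)
  have "0 < length (sort dl)" using r ls by simp
  then have "sort dl ! 0 \<in> set (sort dl)" by (rule nth_mem)
  then have mem: "sort dl ! 0 \<in> set dl" by simp
  show "0 < lam Sx r" unfolding lamv using mem pos unfolding dl_def diag_mat_def using Sx by auto
  fix i assume i: "i < r"
  have "Sx $$ (i,i) \<in> set (sort dl)" unfolding dl_def diag_mat_def using Sx i by auto
  then obtain k where k: "k < length (sort dl)" "sort dl ! k = Sx $$ (i,i)" unfolding in_set_conv_nth by blast
  have "sort dl ! 0 \<le> sort dl ! k" by (rule sorted_nth_mono) (use k ls in auto)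
  then show "lam Sx r \<le> Sx $$ (i,i)" unfolding lamv k(2) .
qed

lemma within_to_at:
  assumes "(g has_real_derivative D) (at t within {0..})" and "0 < t"
  shows "(g has_real_derivative D) (at t)"
proof -
  have "(g has_real_derivative D) (at t within {0<..})"
    by (rule DERIV_subset[OF assms(1)]) auto
  moreover have "at t within {0<..} = at t" by (rule at_within_open) (use assms(2) in auto)
  ultimately show ?thesis by simp
qed

lemma nonincr_on:
  fixes g g' :: "real \<Rightarrow> real"
  assumes d: "\<And>t. 0 \<le> t \<Longrightarrow> (g has_real_derivative g' t) (at t within {0..})"
    and n: "\<And>t. 0 \<le> t \<Longrightarrow> g' t \<le> 0" and ab: "0 \<le> a" "a \<le> b"
  shows "g b \<le> g a"
proof -
  have "continuous_on {0..} g" by (rule DERIV_continuous_on[OF d]) auto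
  then have cont: "continuous_on {a..b} (\<lambda>t. - g t)"
    by (intro continuous_intros) (rule continuous_on_subset, use ab in auto)
  have "(\<lambda>t. - g t) a \<le> (\<lambda>t. - g t) b"
  proof (rule DERIV_nonneg_imp_increasing_open[OF ab(2) _ cont])
    fix x assume x: "a < x" "x < b"
    have "(g has_real_derivative g' x) (at x)" by (rule within_to_at[OF d]) (use x ab in auto)
    then have "((\<lambda>t. - g t) has_real_derivative - g' x) (at x)" by (rule DERIV_minus)
    moreover have "0 \<le> - g' x" using n[of x] x ab by auto
    ultimately show "\<exists>y. ((\<lambda>t. - g t) has_real_derivative y) (at x) \<and> 0 \<le> y" by blast
  qed
  then show ?thesis by simp
qed

lemma const_on:
  fixes g :: "real \<Rightarrow> real"
  assumes d: "\<And>t. 0 \<le> t \<Longrightarrow> (g has_real_derivative 0) (at t within {0..})" and t: "0 \<le> t"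
  shows "g t = g 0"
proof -
  have "g t \<le> g 0" by (rule nonincr_on[of g "\<lambda>_. 0"]) (use d t in auto)
  moreover have "(\<lambda>t. - g t) t \<le> (\<lambda>t. - g t) 0"
    by (rule nonincr_on[of _ "\<lambda>_. 0"]) (use d t in \<open>auto intro: DERIV_minus[where D = 0, simplified]\<close>)
  ultimately show ?thesis by simp
qed

lemma my_mult:
  "(f has_real_derivative D) (at x within S) \<Longrightarrow> (g has_real_derivative E) (at x within S) \<Longrightarrow>
   ((\<lambda>t. f t * g t) has_real_derivative (D * g x + f x * E)) (at x within S)"
  by (drule (1) DERIV_mult) (simp add: mult.commute)

lemma swap_id1:
  fixes e :: "nat \<Rightarrow> nat \<Rightarrow> real" and s :: "nat \<Rightarrow> real" and U v :: "nat \<Rightarrow> nat \<Rightarrow> real"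
  shows "(\<Sum>i<r. \<Sum>j<m. e i j * s i * (\<Sum>l<h. U i l * v j l))
       = (\<Sum>i<r. \<Sum>l<h. U i l * (s i * (\<Sum>j<m. e i j * v j l)))"
proof (rule sum.cong[OF refl])
  fix i
  have "(\<Sum>j<m. e i j * s i * (\<Sum>l<h. U i l * v j l)) = (\<Sum>j<m. \<Sum>l<h. U i l * (s i * (e i j * v j l)))"
    by (simp add: sum_distrib_left mult_ac)
  also have "\<dots> = (\<Sum>l<h. \<Sum>j<m. U i l * (s i * (e i j * v j l)))" by (rule sum.swap)
  also have "\<dots> = (\<Sum>l<h. U i l * (s i * (\<Sum>j<m. e i j * v j l)))"
    by (simp add: sum_distrib_left)
  finally show "(\<Sum>j<m. e i j * s i * (\<Sum>l<h. U i l * v j l)) = (\<Sum>l<h. U i l * (s i * (\<Sum>j<m. e i j * v j l)))" .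
qed

lemma swap_id2:
  fixes e :: "nat \<Rightarrow> nat \<Rightarrow> real" and s :: "nat \<Rightarrow> real" and u V :: "nat \<Rightarrow> nat \<Rightarrow> real"
  shows "(\<Sum>i<r. \<Sum>j<m. e i j * s i * (\<Sum>l<h. u i l * V j l))
       = (\<Sum>j<m. \<Sum>l<h. V j l * (\<Sum>i<r. e i j * s i * u i l))"
proof -
  have "(\<Sum>i<r. \<Sum>j<m. e i j * s i * (\<Sum>l<h. u i l * V j l))
      = (\<Sum>j<m. \<Sum>i<r. e i j * s i * (\<Sum>l<h. u i l * V j l))" by (rule sum.swap)
  also have "\<dots> = (\<Sum>j<m. \<Sum>l<h. V j l * (\<Sum>i<r. e i j * s i * u i l))"
  proof (rule sum.cong[OF refl])
    fix j
    have "(\<Sum>i<r. e i j * s i * (\<Sum>l<h. u i l * V j l)) = (\<Sum>i<r. \<Sum>l<h. V j l * (e i j * s i * u i l))"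
      by (simp add: sum_distrib_left mult_ac)
    also have "\<dots> = (\<Sum>l<h. \<Sum>i<r. V j l * (e i j * s i * u i l))" by (rule sum.swap)
    also have "\<dots> = (\<Sum>l<h. V j l * (\<Sum>i<r. e i j * s i * u i l))" by (simp add: sum_distrib_left)
    finally show "(\<Sum>i<r. e i j * s i * (\<Sum>l<h. u i l * V j l)) = (\<Sum>l<h. V j l * (\<Sum>i<r. e i j * s i * u i l))" .
  qed
  finally show ?thesis .
qed

locale flow =
  fixes r m h :: nat and s :: "nat \<Rightarrow> real" and wy :: "nat \<Rightarrow> nat \<Rightarrow> real"
    and u :: "nat \<Rightarrow> nat \<Rightarrow> real \<Rightarrow> real" and v :: "nat \<Rightarrow> nat \<Rightarrow> real \<Rightarrow> real"
    and e :: "nat \<Rightarrow> nat \<Rightarrow> real \<Rightarrow> real"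
  assumes e_def: "\<And>i j t. e i j t = wy i j - s i * (\<Sum>l<h. u i l t * v j l t)"
    and du: "\<And>i k t. i < r \<Longrightarrow> k < h \<Longrightarrow> 0 \<le> t \<Longrightarrow>
       ((\<lambda>t. u i k t) has_real_derivative (s i * (\<Sum>j<m. e i j t * v j k t))) (at t within {0..})"
    and dv: "\<And>j k t. j < m \<Longrightarrow> k < h \<Longrightarrow> 0 \<le> t \<Longrightarrow>
       ((\<lambda>t. v j k t) has_real_derivative (\<Sum>i<r. e i j t * s i * u i k t)) (at t within {0..})"
begin

definition U' where "U' i k t = s i * (\<Sum>j<m. e i j t * v j k t)"
definition V' where "V' j k t = (\<Sum>i<r. e i j t * s i * u i k t)"
definition f where "f t = (\<Sum>i<r. \<Sum>j<m. (e i j t)\<^sup>2)"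

lemma du': "i < r \<Longrightarrow> k < h \<Longrightarrow> 0 \<le> t \<Longrightarrow> ((\<lambda>t. u i k t) has_real_derivative U' i k t) (at t within {0..})"
  unfolding U'_def by (rule du)

lemma dv': "j < m \<Longrightarrow> k < h \<Longrightarrow> 0 \<le> t \<Longrightarrow> ((\<lambda>t. v j k t) has_real_derivative V' j k t) (at t within {0..})"
  unfolding V'_def by (rule dv)

lemma de:
  assumes i: "i < r" and j: "j < m" and t: "0 \<le> t"
  shows "((\<lambda>t. e i j t) has_real_derivative (- s i * (\<Sum>l<h. U' i l t * v j l t + u i l t * V' j l t))) (at t within {0..})"
proof -
  have eq: "(\<lambda>t. e i j t) = (\<lambda>t. wy i j - s i * (\<Sum>l<h. u i l t * v j l t))" using e_def by auto
  have "((\<lambda>t. \<Sum>l<h. u i l t * v j l t) has_real_derivative (\<Sum>l<h. U' i l t * v j l t + u i l t * V' j l t)) (at t within {0..})"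
    by (rule DERIV_sum, rule my_mult) (use du' dv' i j t in auto)
  then have "((\<lambda>t. wy i j - s i * (\<Sum>l<h. u i l t * v j l t)) has_real_derivative (0 - s i * (\<Sum>l<h. U' i l t * v j l t + u i l t * V' j l t))) (at t within {0..})"
    by (intro DERIV_diff DERIV_const DERIV_cmult)
  then show ?thesis unfolding eq by simp
qed

lemma df:
  assumes t: "0 \<le> t"
  shows "(f has_real_derivative (-2 * ((\<Sum>i<r. \<Sum>k<h. (U' i k t)\<^sup>2) + (\<Sum>j<m. \<Sum>k<h. (V' j k t)\<^sup>2)))) (at t within {0..})"
proof -
  have fe: "f = (\<lambda>t. \<Sum>i<r. \<Sum>j<m. e i j t * e i j t)" unfolding f_def by (auto simp: power2_eq_square)
  have "(f has_real_derivative (\<Sum>i<r. \<Sum>j<m.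
          (- s i * (\<Sum>l<h. U' i l t * v j l t + u i l t * V' j l t)) * e i j t + e i j t * (- s i * (\<Sum>l<h. U' i l t * v j l t + u i l t * V' j l t))))
        (at t within {0..})"
    unfolding fe by (intro DERIV_sum my_mult) (use de t in auto)
  moreover have "(\<Sum>i<r. \<Sum>j<m.
          (- s i * (\<Sum>l<h. U' i l t * v j l t + u i l t * V' j l t)) * e i j t + e i j t * (- s i * (\<Sum>l<h. U' i l t * v j l t + u i l t * V' j l t)))
      = -2 * ((\<Sum>i<r. \<Sum>j<m. e i j t * s i * (\<Sum>l<h. U' i l t * v j l t)) + (\<Sum>i<r. \<Sum>j<m. e i j t * s i * (\<Sum>l<h. u i l t * V' j l t)))"
  proof -
    have "(\<Sum>i<r. \<Sum>j<m.
          (- s i * (\<Sum>l<h. U' i l t * v j l t + u i l t * V' j l t)) * e i j t + e i j t * (- s i * (\<Sum>l<h. U' i l t * v j l t + u i l t * V' j l t)))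
      = (\<Sum>i<r. \<Sum>j<m. -2 * (e i j t * s i * (\<Sum>l<h. U' i l t * v j l t) + e i j t * s i * (\<Sum>l<h. u i l t * V' j l t)))"
      by (intro sum.cong refl) (simp add: sum.distrib algebra_simps)
    also have "\<dots> = -2 * (\<Sum>i<r. \<Sum>j<m. (e i j t * s i * (\<Sum>l<h. U' i l t * v j l t) + e i j t * s i * (\<Sum>l<h. u i l t * V' j l t)))"
      by (simp only: sum_distrib_left)
    also have "\<dots> = -2 * ((\<Sum>i<r. \<Sum>j<m. e i j t * s i * (\<Sum>l<h. U' i l t * v j l t)) + (\<Sum>i<r. \<Sum>j<m. e i j t * s i * (\<Sum>l<h. u i l t * V' j l t)))"
      by (simp only: sum.distrib)
    finally show ?thesis .
  qed
  moreover have "(\<Sum>i<r. \<Sum>j<m. e i j t * s i * (\<Sum>l<h. U' i l t * v j l t)) = (\<Sum>i<r. \<Sum>k<h. (U' i k t)\<^sup>2)"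
    using swap_id1[of "\<lambda>i j. e i j t" s "\<lambda>i l. U' i l t" "\<lambda>j l. v j l t" h m r]
    by (simp add: U'_def[symmetric] power2_eq_square)
  moreover have "(\<Sum>i<r. \<Sum>j<m. e i j t * s i * (\<Sum>l<h. u i l t * V' j l t)) = (\<Sum>j<m. \<Sum>k<h. (V' j k t)\<^sup>2)"
    using swap_id2[of "\<lambda>i j. e i j t" s "\<lambda>i l. u i l t" "\<lambda>j l. V' j l t" h m r]
    by (simp add: V'_def[symmetric] power2_eq_square)
  ultimately show ?thesis by simp
qed

end

lemma swap_id3:
  fixes e :: "nat \<Rightarrow> nat \<Rightarrow> real" and s a b :: "nat \<Rightarrow> real"
  shows "(\<Sum>i<r. (s i * (\<Sum>j<m. e i j * a j)) * b i) = (\<Sum>j<m. a j * (\<Sum>i<r. e i j * s i * b i))"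
proof -
  have "(\<Sum>i<r. (s i * (\<Sum>j<m. e i j * a j)) * b i) = (\<Sum>i<r. \<Sum>j<m. a j * (e i j * s i * b i))"
    by (simp add: sum_distrib_left sum_distrib_right mult_ac)
  also have "\<dots> = (\<Sum>j<m. \<Sum>i<r. a j * (e i j * s i * b i))" by (rule sum.swap)
  also have "\<dots> = (\<Sum>j<m. a j * (\<Sum>i<r. e i j * s i * b i))" by (simp add: sum_distrib_left)
  finally show ?thesis .
qed

context flow begin

definition P where "P k l t = (\<Sum>i<r. u i k t * u i l t) - (\<Sum>j<m. v j k t * v j l t)"

lemma dP:
  assumes k: "k < h" and l: "l < h" and t: "0 \<le> t"
  shows "((\<lambda>t. P k l t) has_real_derivative 0) (at t within {0..})"
proof -
  have "((\<lambda>t. P k l t) has_real_derivative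
      (\<Sum>i<r. U' i k t * u i l t + u i k t * U' i l t) - (\<Sum>j<m. V' j k t * v j l t + v j k t * V' j l t))
      (at t within {0..})"
    unfolding P_def by (intro DERIV_diff DERIV_sum my_mult) (use du' dv' k l t in auto)
  moreover have "(\<Sum>i<r. U' i k t * u i l t + u i k t * U' i l t) = (\<Sum>j<m. V' j k t * v j l t + v j k t * V' j l t)"
  proof -
    have a: "(\<Sum>i<r. U' i k t * u i l t) = (\<Sum>j<m. v j k t * V' j l t)"
      unfolding U'_def V'_def by (rule swap_id3)
    have b: "(\<Sum>i<r. u i k t * U' i l t) = (\<Sum>j<m. V' j k t * v j l t)"
      using swap_id3[where e="\<lambda>i j. e i j t" and s=s and a="\<lambda>j. v j l t" and b="\<lambda>i. u i k t" and m=m and r=r]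
      unfolding U'_def V'_def by (simp add: mult_ac)
    show ?thesis by (simp add: sum.distrib a b)
  qed
  ultimately show ?thesis by simp
qed

lemma P_const: "k < h \<Longrightarrow> l < h \<Longrightarrow> 0 \<le> t \<Longrightarrow> P k l t = P k l 0"
  by (rule const_on[of "\<lambda>t. P k l t"]) (use dP in auto)

lemma f_nonneg: "0 \<le> f t"
  unfolding f_def by (intro sum_nonneg) auto

lemma decay:
  assumes kap: "0 \<le> \<kappa>"
    and key: "\<And>t. 0 \<le> t \<Longrightarrow> \<kappa> * f t \<le> (\<Sum>i<r. \<Sum>k<h. (U' i k t)\<^sup>2) + (\<Sum>j<m. \<Sum>k<h. (V' j k t)\<^sup>2)"
    and t: "0 \<le> t"
  shows "f t \<le> exp (- 2 * \<kappa> * t) * f 0"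
proof -
  define g where "g t = exp (2 * \<kappa> * t) * f t" for t
  define g' where "g' t = 2 * \<kappa> * exp (2 * \<kappa> * t) * f t + exp (2 * \<kappa> * t) *
      (-2 * ((\<Sum>i<r. \<Sum>k<h. (U' i k t)\<^sup>2) + (\<Sum>j<m. \<Sum>k<h. (V' j k t)\<^sup>2)))" for t
  have dg: "(g has_real_derivative g' t) (at t within {0..})" if "0 \<le> t" for t
  proof -
    have "((\<lambda>t. exp (2 * \<kappa> * t)) has_real_derivative exp (2 * \<kappa> * t) * (2 * \<kappa>)) (at t within {0..})"
      by (rule DERIV_chain'[where g = exp]) (auto intro!: derivative_eq_intros)
    then have "(g has_real_derivative (exp (2 * \<kappa> * t) * (2 * \<kappa>)) * f t + exp (2 * \<kappa> * t) *
      (-2 * ((\<Sum>i<r. \<Sum>k<h. (U' i k t)\<^sup>2) + (\<Sum>j<m. \<Sum>k<h. (V' j k t)\<^sup>2)))) (at t within {0..})"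
      unfolding g_def by (rule my_mult) (rule df[OF that])
    then show ?thesis unfolding g'_def by (simp add: mult_ac)
  qed
  have ng: "g' t \<le> 0" if "0 \<le> t" for t
  proof -
    have "g' t = 2 * exp (2 * \<kappa> * t) * (\<kappa> * f t - ((\<Sum>i<r. \<Sum>k<h. (U' i k t)\<^sup>2) + (\<Sum>j<m. \<Sum>k<h. (V' j k t)\<^sup>2)))"
      unfolding g'_def by (simp add: algebra_simps)
    moreover have "\<kappa> * f t - ((\<Sum>i<r. \<Sum>k<h. (U' i k t)\<^sup>2) + (\<Sum>j<m. \<Sum>k<h. (V' j k t)\<^sup>2)) \<le> 0"
      using key[OF that] by linarith
    ultimately show ?thesis by (simp add: mult_nonneg_nonpos)
  qed
  have "g t \<le> g 0" by (rule nonincr_on[of g g']) (use dg ng t in auto)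
  then have "exp (2 * \<kappa> * t) * f t \<le> f 0" unfolding g_def by simp
  then have "exp (- 2 * \<kappa> * t) * (exp (2 * \<kappa> * t) * f t) \<le> exp (- 2 * \<kappa> * t) * f 0"
    by (rule mult_left_mono) simp
  moreover have "exp (- 2 * \<kappa> * t) * (exp (2 * \<kappa> * t) * f t) = f t"
  proof -
    have "exp (- 2 * \<kappa> * t) * exp (2 * \<kappa> * t) = 1" by (simp add: exp_add[symmetric])
    then show ?thesis by (simp add: mult.assoc[symmetric])
  qed
  ultimately show ?thesis by linarith
qed

end

lemma exp_neg_tendsto: "(\<kappa>::real) > 0 \<Longrightarrow> ((\<lambda>t. exp (- \<kappa> * t)) \<longlongrightarrow> 0) at_top"
proof -
  assume k: "\<kappa> > 0"
  have "filterlim (\<lambda>t::real. - \<kappa> * t) at_bot at_top"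
    by (rule filterlim_tendsto_neg_mult_at_bot[OF tendsto_const]) (use k in \<open>auto simp: filterlim_ident\<close>)
  then show ?thesis by (rule filterlim_compose[OF exp_at_bot])
qed

lemma conv_lemma:
  fixes w w' :: "real \<Rightarrow> real"
  assumes dw: "\<And>t. 0 \<le> t \<Longrightarrow> (w has_real_derivative w' t) (at t within {0..})"
    and bnd: "\<And>t. 0 \<le> t \<Longrightarrow> \<bar>w' t\<bar> \<le> B * exp (- \<kappa> * t)" and k: "\<kappa> > 0"
    and wb: "\<And>t. 0 \<le> t \<Longrightarrow> \<bar>w t\<bar> \<le> M"
  shows "\<exists>l. (w \<longlongrightarrow> l) at_top"
proof -
  have B: "0 \<le> B" using bnd[of 0] by simp
  define g where "g t = w t + (B / \<kappa>) * exp (- \<kappa> * t)" for t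
  have dg: "(g has_real_derivative (w' t - B * exp (- \<kappa> * t))) (at t within {0..})" if "0 \<le> t" for t
  proof -
    have "((\<lambda>t. exp (- \<kappa> * t)) has_real_derivative exp (- \<kappa> * t) * (- \<kappa>)) (at t within {0..})"
      by (rule DERIV_chain'[where g = exp]) (auto intro!: derivative_eq_intros)
    then have "(g has_real_derivative (w' t + (B / \<kappa>) * (exp (- \<kappa> * t) * (- \<kappa>)))) (at t within {0..})"
      unfolding g_def by (intro DERIV_add DERIV_cmult dw that)
    then show ?thesis using k by (simp add: field_simps)
  qed
  have mono: "g b \<le> g a" if "0 \<le> a" "a \<le> b" for a b
    by (rule nonincr_on[of g "\<lambda>t. w' t - B * exp (- \<kappa> * t)"]) (use dg bnd that in \<open>auto simp: abs_le_iff\<close>)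
  have gb: "- M \<le> g t" if "0 \<le> t" for t
  proof -
    have "0 \<le> (B / \<kappa>) * exp (- \<kappa> * t)" using B k by simp
    then show ?thesis unfolding g_def using wb[OF that] by (simp add: abs_le_iff)
  qed
  define l where "l = (INF t\<in>{0..}. g t)"
  have bdd: "bdd_below (g ` {0..})" using gb by (auto intro!: bdd_belowI[of _ "- M"])
  have lg: "l \<le> g t" if "0 \<le> t" for t unfolding l_def by (rule cINF_lower[OF bdd]) (use that in auto)
  have gl: "(g \<longlongrightarrow> l) at_top"
  proof (rule decreasing_tendsto)
    show "\<forall>\<^sub>F n in at_top. l \<le> g n" using lg by (auto simp: eventually_at_top_linorder)
  next
    fix x assume "l < x"
    then obtain t0 where t0: "t0 \<in> {0..}" "g t0 < x" unfolding l_def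
      using cINF_less_iff[OF _ bdd] by blast
    show "\<forall>\<^sub>F n in at_top. g n < x"
      unfolding eventually_at_top_linorder
      by (rule exI[of _ t0]) (use t0 mono in \<open>auto intro: le_less_trans\<close>)
  qed
  have "((\<lambda>t. (B / \<kappa>) * exp (- \<kappa> * t)) \<longlongrightarrow> (B / \<kappa>) * 0) at_top"
    by (intro tendsto_mult tendsto_const exp_neg_tendsto k)
  then have "((\<lambda>t. g t - (B / \<kappa>) * exp (- \<kappa> * t)) \<longlongrightarrow> l - 0) at_top"
    using gl by (intro tendsto_diff) auto
  then have "(w \<longlongrightarrow> l) at_top" unfolding g_def by simp
  then show ?thesis by blast
qed

context flow begin

definition N where "N t = (\<Sum>i<r. \<Sum>k<h. (u i k t)\<^sup>2) + (\<Sum>j<m. \<Sum>k<h. (v j k t)\<^sup>2)"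

lemma N_nonneg: "0 \<le> N t" unfolding N_def by (intro add_nonneg_nonneg sum_nonneg) auto

lemma u_le_N: "i < r \<Longrightarrow> k < h \<Longrightarrow> \<bar>u i k t\<bar> \<le> sqrt (N t)"
proof -
  assume i: "i < r" and k: "k < h"
  have "(u i k t)\<^sup>2 \<le> (\<Sum>k'<h. (u i k' t)\<^sup>2)" by (rule member_le_sum) (use k in auto)
  also have "\<dots> \<le> (\<Sum>i'<r. \<Sum>k'<h. (u i' k' t)\<^sup>2)"
    by (rule member_le_sum[of i "{..<r}" "\<lambda>i'. \<Sum>k'<h. (u i' k' t)\<^sup>2"]) (use i in \<open>auto intro: sum_nonneg\<close>)
  also have "\<dots> \<le> N t" unfolding N_def by (simp add: sum_nonneg)
  finally have "\<bar>u i k t\<bar>\<^sup>2 \<le> N t" by simp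
  then show ?thesis by (rule real_le_rsqrt)
qed

lemma v_le_N: "j < m \<Longrightarrow> k < h \<Longrightarrow> \<bar>v j k t\<bar> \<le> sqrt (N t)"
proof -
  assume j: "j < m" and k: "k < h"
  have "(v j k t)\<^sup>2 \<le> (\<Sum>k'<h. (v j k' t)\<^sup>2)" by (rule member_le_sum) (use k in auto)
  also have "\<dots> \<le> (\<Sum>j'<m. \<Sum>k'<h. (v j' k' t)\<^sup>2)"
    by (rule member_le_sum[of j "{..<m}" "\<lambda>j'. \<Sum>k'<h. (v j' k' t)\<^sup>2"]) (use j in \<open>auto intro: sum_nonneg\<close>)
  also have "\<dots> \<le> N t" unfolding N_def by (simp add: sum_nonneg)
  finally have "\<bar>v j k t\<bar>\<^sup>2 \<le> N t" by simp
  then show ?thesis by (rule real_le_rsqrt)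
qed

lemma e_le_f: "i < r \<Longrightarrow> j < m \<Longrightarrow> (e i j t)\<^sup>2 \<le> f t"
proof -
  assume i: "i < r" and j: "j < m"
  have "(e i j t)\<^sup>2 \<le> (\<Sum>j'<m. (e i j' t)\<^sup>2)" by (rule member_le_sum) (use j in auto)
  also have "\<dots> \<le> f t" unfolding f_def
    by (rule member_le_sum[of i "{..<r}" "\<lambda>i'. \<Sum>j'<m. (e i' j' t)\<^sup>2"]) (use i in \<open>auto intro: sum_nonneg\<close>)
  finally show ?thesis .
qed

definition N' where "N' t = (\<Sum>i<r. \<Sum>k<h. U' i k t * u i k t + u i k t * U' i k t)
   + (\<Sum>j<m. \<Sum>k<h. V' j k t * v j k t + v j k t * V' j k t)"

lemma dN: "0 \<le> t \<Longrightarrow> (N has_real_derivative N' t) (at t within {0..})"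
proof -
  assume t: "0 \<le> t"
  have eq: "N = (\<lambda>t. (\<Sum>i<r. \<Sum>k<h. u i k t * u i k t) + (\<Sum>j<m. \<Sum>k<h. v j k t * v j k t))"
    unfolding N_def by (auto simp: power2_eq_square)
  show ?thesis unfolding N'_def eq
    by (intro DERIV_add DERIV_sum my_mult) (use du' dv' t in auto)
qed

end

context flow begin

lemma U'_bound:
  assumes sn: "\<And>i. i < r \<Longrightarrow> 0 \<le> s i" and i: "i < r" and k: "k < h"
    and eb: "\<And>i j. i < r \<Longrightarrow> j < m \<Longrightarrow> \<bar>e i j t\<bar> \<le> \<epsilon>"
  shows "\<bar>U' i k t\<bar> \<le> (\<Sum>i<r. s i) * real m * \<epsilon> * sqrt (N t)"
proof -
  have "\<bar>\<Sum>j<m. e i j t * v j k t\<bar> \<le> (\<Sum>j<m. \<bar>e i j t * v j k t\<bar>)" by (rule sum_abs)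
  also have "\<dots> \<le> (\<Sum>j<m. \<epsilon> * sqrt (N t))"
  proof (rule sum_mono)
    fix j assume j: "j \<in> {..<m}"
    have ep: "0 \<le> \<epsilon>" using eb[OF i, of j] j by (meson abs_ge_zero order_trans lessThan_iff)
    have "\<bar>e i j t * v j k t\<bar> = \<bar>e i j t\<bar> * \<bar>v j k t\<bar>" by (simp add: abs_mult)
    also have "\<dots> \<le> \<epsilon> * sqrt (N t)"
      by (rule mult_mono) (use eb[OF i] j v_le_N[OF _ k] ep in auto)
    finally show "\<bar>e i j t * v j k t\<bar> \<le> \<epsilon> * sqrt (N t)" .
  qed
  finally have a: "\<bar>\<Sum>j<m. e i j t * v j k t\<bar> \<le> real m * (\<epsilon> * sqrt (N t))" by simp
  have si: "s i \<le> (\<Sum>i<r. s i)" by (rule member_le_sum) (use i sn in auto)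
  have "\<bar>U' i k t\<bar> = s i * \<bar>\<Sum>j<m. e i j t * v j k t\<bar>" unfolding U'_def using sn[OF i] by (simp add: abs_mult)
  also have "\<dots> \<le> (\<Sum>i<r. s i) * (real m * (\<epsilon> * sqrt (N t)))"
    by (rule mult_mono[OF si a]) (use sn i in \<open>auto intro: sum_nonneg\<close>)
  finally show ?thesis by (simp add: mult_ac)
qed

lemma V'_bound:
  assumes sn: "\<And>i. i < r \<Longrightarrow> 0 \<le> s i" and j: "j < m" and k: "k < h"
    and eb: "\<And>i j. i < r \<Longrightarrow> j < m \<Longrightarrow> \<bar>e i j t\<bar> \<le> \<epsilon>"
  shows "\<bar>V' j k t\<bar> \<le> (\<Sum>i<r. s i) * real r * \<epsilon> * sqrt (N t)"
proof -
  have "\<bar>V' j k t\<bar> \<le> (\<Sum>i<r. \<bar>e i j t * s i * u i k t\<bar>)" unfolding V'_def by (rule sum_abs)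
  also have "\<dots> \<le> (\<Sum>i<r. \<epsilon> * (\<Sum>i<r. s i) * sqrt (N t))"
  proof (rule sum_mono)
    fix i assume i: "i \<in> {..<r}"
    have si: "s i \<le> (\<Sum>i<r. s i)" by (rule member_le_sum) (use i sn in auto)
    have ep: "0 \<le> \<epsilon>" using eb[OF _ j, of i] i by (meson abs_ge_zero order_trans lessThan_iff)
    have Sp: "0 \<le> (\<Sum>i<r. s i)" using sn by (intro sum_nonneg) auto
    have "\<bar>e i j t * s i * u i k t\<bar> = \<bar>e i j t\<bar> * s i * \<bar>u i k t\<bar>" using sn i by (simp add: abs_mult)
    also have "\<dots> \<le> \<epsilon> * (\<Sum>i<r. s i) * sqrt (N t)"
      by (intro mult_mono) (use eb[OF _ j] i si sn u_le_N[OF _ k] ep Sp in auto)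
    finally show "\<bar>e i j t * s i * u i k t\<bar> \<le> \<epsilon> * (\<Sum>i<r. s i) * sqrt (N t)" .
  qed
  finally show ?thesis by (simp add: mult_ac)
qed

end

context flow begin

lemma N_bounded:
  assumes sn: "\<And>i. i < r \<Longrightarrow> 0 \<le> s i" and k: "\<kappa> > 0"
    and fb: "\<And>t. 0 \<le> t \<Longrightarrow> f t \<le> exp (- 2 * \<kappa> * t) * f 0"
  shows "\<exists>Nmax. \<forall>t\<ge>0. N t \<le> Nmax"
proof -
  define \<epsilon> where "\<epsilon> t = sqrt (f 0) * exp (- \<kappa> * t)" for t
  have eps_nn: "0 \<le> \<epsilon> t" for t unfolding \<epsilon>_def using f_nonneg by simp
  have eb: "\<bar>e i j t\<bar> \<le> \<epsilon> t" if "i < r" "j < m" "0 \<le> t" for i j t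
  proof -
    have "(e i j t)\<^sup>2 \<le> exp (- 2 * \<kappa> * t) * f 0" using e_le_f[OF that(1,2), of t] fb[OF that(3)] by linarith
    also have "\<dots> = (\<epsilon> t)\<^sup>2"
    proof -
      have "exp (- \<kappa> * t) * exp (- \<kappa> * t) = exp (- \<kappa> * t + - \<kappa> * t)" by (rule exp_add[symmetric])
      also have "- \<kappa> * t + - \<kappa> * t = - 2 * \<kappa> * t" by simp
      finally have ee: "exp (- \<kappa> * t) * exp (- \<kappa> * t) = exp (- 2 * \<kappa> * t)" .
      have ss: "sqrt (f 0) * sqrt (f 0) = f 0" using f_nonneg[of 0] by simp
      have "(\<epsilon> t)\<^sup>2 = (sqrt (f 0) * sqrt (f 0)) * (exp (- \<kappa> * t) * exp (- \<kappa> * t))"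
        unfolding \<epsilon>_def by (simp add: power2_eq_square mult_ac)
      then show ?thesis unfolding ee ss by simp
    qed
    finally have "(e i j t)\<^sup>2 \<le> (\<epsilon> t)\<^sup>2" .
    then have "\<bar>e i j t\<bar> \<le> \<bar>\<epsilon> t\<bar>" by (simp only: abs_le_square_iff)
    then show ?thesis using eps_nn[of t] by simp
  qed
  define C0 where "C0 = (\<Sum>i<r. s i) * (real m + real r)"
  have Sp: "0 \<le> (\<Sum>i<r. s i)" using sn by (intro sum_nonneg) auto
  have C0: "0 \<le> C0" unfolding C0_def using Sp by simp
  have U'b: "\<bar>U' i k t\<bar> \<le> C0 * \<epsilon> t * sqrt (N t)" if "i < r" "k < h" "0 \<le> t" for i k t
  proof -
    have "\<bar>U' i k t\<bar> \<le> (\<Sum>i<r. s i) * real m * \<epsilon> t * sqrt (N t)"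
      by (rule U'_bound[OF sn that(1,2)]) (use eb that(3) in auto)
    also have "\<dots> \<le> C0 * \<epsilon> t * sqrt (N t)" unfolding C0_def
      by (intro mult_right_mono mult_left_mono) (use Sp eps_nn N_nonneg in auto)
    finally show ?thesis .
  qed
  have V'b: "\<bar>V' j k t\<bar> \<le> C0 * \<epsilon> t * sqrt (N t)" if "j < m" "k < h" "0 \<le> t" for j k t
  proof -
    have "\<bar>V' j k t\<bar> \<le> (\<Sum>i<r. s i) * real r * \<epsilon> t * sqrt (N t)"
      by (rule V'_bound[OF sn that(1,2)]) (use eb that(3) in auto)
    also have "\<dots> \<le> C0 * \<epsilon> t * sqrt (N t)" unfolding C0_def
      by (intro mult_right_mono mult_left_mono) (use Sp eps_nn N_nonneg in auto)
    finally show ?thesis .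
  qed
  define C where "C = 2 * C0 * (real r * real h + real m * real h)"
  have C: "0 \<le> C" unfolding C_def using C0 by simp
  have term_b: "2 * (a * b) \<le> 2 * C0 * \<epsilon> t * N t" if "\<bar>a\<bar> \<le> sqrt (N t)" "\<bar>b\<bar> \<le> C0 * \<epsilon> t * sqrt (N t)" for a b t
  proof -
    have "a * b \<le> \<bar>a\<bar> * \<bar>b\<bar>" by (simp add: abs_mult[symmetric])
    also have "\<dots> \<le> sqrt (N t) * (C0 * \<epsilon> t * sqrt (N t))"
      by (rule mult_mono) (use that N_nonneg in auto)
    also have "\<dots> = C0 * \<epsilon> t * N t" using N_nonneg[of t] by (simp add: mult_ac)
    finally show ?thesis by simp
  qed
  have N'b: "N' t \<le> C * \<epsilon> t * N t" if t: "0 \<le> t" for t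
  proof -
    have "N' t \<le> (\<Sum>i<r. \<Sum>k<h. 2 * C0 * \<epsilon> t * N t) + (\<Sum>j<m. \<Sum>k<h. 2 * C0 * \<epsilon> t * N t)"
      unfolding N'_def
    proof (intro add_mono sum_mono)
      fix i k assume "i \<in> {..<r}" "k \<in> {..<h}"
      then show "U' i k t * u i k t + u i k t * U' i k t \<le> 2 * C0 * \<epsilon> t * N t"
        using term_b[OF u_le_N U'b[OF _ _ t]] by (simp add: mult_ac)
    next
      fix j k assume "j \<in> {..<m}" "k \<in> {..<h}"
      then show "V' j k t * v j k t + v j k t * V' j k t \<le> 2 * C0 * \<epsilon> t * N t"
        using term_b[OF v_le_N V'b[OF _ _ t]] by (simp add: mult_ac)
    qed
    also have "\<dots> = C * \<epsilon> t * N t" unfolding C_def by (simp add: algebra_simps)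
    finally show ?thesis .
  qed
  define \<phi> where "\<phi> t = (C * sqrt (f 0) / \<kappa>) * exp (- \<kappa> * t)" for t
  define \<psi> where "\<psi> t = N t * exp (\<phi> t)" for t
  have d\<phi>: "(\<phi> has_real_derivative - C * \<epsilon> t) (at t within {0..})" for t
  proof -
    have "((\<lambda>t. exp (- \<kappa> * t)) has_real_derivative exp (- \<kappa> * t) * (- \<kappa>)) (at t within {0..})"
      by (rule DERIV_chain'[where g = exp]) (auto intro!: derivative_eq_intros)
    then have "(\<phi> has_real_derivative (C * sqrt (f 0) / \<kappa>) * (exp (- \<kappa> * t) * (- \<kappa>))) (at t within {0..})"
      unfolding \<phi>_def by (rule DERIV_cmult)
    then show ?thesis unfolding \<epsilon>_def using k by (simp add: field_simps)
  qed
  have d\<psi>: "(\<psi> has_real_derivative (N' t * exp (\<phi> t) + N t * (exp (\<phi> t) * (- C * \<epsilon> t)))) (at t within {0..})"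
    if "0 \<le> t" for t
    unfolding \<psi>_def by (intro my_mult dN that DERIV_chain'[where g = exp, OF d\<phi>]) (auto intro!: derivative_eq_intros)
  have n\<psi>: "N' t * exp (\<phi> t) + N t * (exp (\<phi> t) * (- C * \<epsilon> t)) \<le> 0" if "0 \<le> t" for t
  proof -
    have "N' t * exp (\<phi> t) + N t * (exp (\<phi> t) * (- C * \<epsilon> t)) = exp (\<phi> t) * (N' t - C * \<epsilon> t * N t)"
      by (simp add: algebra_simps)
    moreover have "N' t - C * \<epsilon> t * N t \<le> 0" using N'b[OF that] by simp
    ultimately show ?thesis by (simp add: mult_nonneg_nonpos)
  qed
  have "\<forall>t\<ge>0. N t \<le> \<psi> 0"
  proof (intro allI impI)
    fix t :: real assume t: "0 \<le> t"
    have "\<psi> t \<le> \<psi> 0" by (rule nonincr_on[OF d\<psi> n\<psi>]) (use t in auto)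
    moreover have "N t \<le> \<psi> t"
    proof -
      have "0 \<le> \<phi> t" unfolding \<phi>_def using C k f_nonneg[of 0] by simp
      then have "1 \<le> exp (\<phi> t)" by simp
      then show ?thesis unfolding \<psi>_def using N_nonneg[of t] by (simp add: mult_le_cancel_left1)
    qed
    ultimately show "N t \<le> \<psi> 0" by linarith
  qed
  then show ?thesis by blast
qed

end

context flow begin

lemma converge:
  assumes sn: "\<And>i. i < r \<Longrightarrow> 0 \<le> s i" and k: "\<kappa> > 0"
    and fb: "\<And>t. 0 \<le> t \<Longrightarrow> f t \<le> exp (- 2 * \<kappa> * t) * f 0"
  shows "\<exists>ul vl. (\<forall>i<r. \<forall>k<h. ((\<lambda>t. u i k t) \<longlongrightarrow> ul i k) at_top)
     \<and> (\<forall>j<m. \<forall>k<h. ((\<lambda>t. v j k t) \<longlongrightarrow> vl j k) at_top)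
     \<and> (\<forall>i<r. \<forall>j<m. wy i j - s i * (\<Sum>l<h. ul i l * vl j l) = 0)"
proof -
  obtain Nmax where Nm: "\<And>t. 0 \<le> t \<Longrightarrow> N t \<le> Nmax" using N_bounded[OF sn k fb] by blast
  define \<epsilon> where "\<epsilon> t = sqrt (f 0) * exp (- \<kappa> * t)" for t
  have eps_nn: "0 \<le> \<epsilon> t" for t unfolding \<epsilon>_def using f_nonneg by simp
  have eb: "\<bar>e i j t\<bar> \<le> \<epsilon> t" if "i < r" "j < m" "0 \<le> t" for i j t
  proof -
    have "(e i j t)\<^sup>2 \<le> exp (- 2 * \<kappa> * t) * f 0" using e_le_f[OF that(1,2), of t] fb[OF that(3)] by linarith
    also have "\<dots> = (\<epsilon> t)\<^sup>2"
    proof -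
      have "exp (- \<kappa> * t) * exp (- \<kappa> * t) = exp (- \<kappa> * t + - \<kappa> * t)" by (rule exp_add[symmetric])
      also have "- \<kappa> * t + - \<kappa> * t = - 2 * \<kappa> * t" by simp
      finally have ee: "exp (- \<kappa> * t) * exp (- \<kappa> * t) = exp (- 2 * \<kappa> * t)" .
      have ss: "sqrt (f 0) * sqrt (f 0) = f 0" using f_nonneg[of 0] by simp
      have "(\<epsilon> t)\<^sup>2 = (sqrt (f 0) * sqrt (f 0)) * (exp (- \<kappa> * t) * exp (- \<kappa> * t))"
        unfolding \<epsilon>_def by (simp add: power2_eq_square mult_ac)
      then show ?thesis unfolding ee ss by simp
    qed
    finally have "(e i j t)\<^sup>2 \<le> (\<epsilon> t)\<^sup>2" .
    then have "\<bar>e i j t\<bar> \<le> \<bar>\<epsilon> t\<bar>" by (simp only: abs_le_square_iff)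
    then show ?thesis using eps_nn[of t] by simp
  qed
  have Nm0: "0 \<le> Nmax" using Nm[of 0] N_nonneg[of 0] by simp
  define C0 where "C0 = (\<Sum>i<r. s i) * (real m + real r)"
  have Sp: "0 \<le> (\<Sum>i<r. s i)" using sn by (intro sum_nonneg) auto
  have C0: "0 \<le> C0" unfolding C0_def using Sp by simp
  define B where "B = C0 * sqrt (f 0) * sqrt Nmax"
  have sqN: "sqrt (N t) \<le> sqrt Nmax" if "0 \<le> t" for t using Nm[OF that] by simp
  have epsB: "C0 * \<epsilon> t * sqrt (N t) \<le> B * exp (- \<kappa> * t)" if "0 \<le> t" for t
  proof -
    have "C0 * \<epsilon> t * sqrt (N t) \<le> C0 * \<epsilon> t * sqrt Nmax"
      by (rule mult_left_mono[OF sqN[OF that]]) (use C0 eps_nn in simp)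
    also have "\<dots> = B * exp (- \<kappa> * t)" unfolding B_def \<epsilon>_def by (simp add: mult_ac)
    finally show ?thesis .
  qed
  have uconv: "\<exists>l. ((\<lambda>t. u i k t) \<longlongrightarrow> l) at_top" if i: "i < r" and kk: "k < h" for i k
  proof (rule conv_lemma[where w' = "U' i k" and B = B and \<kappa> = \<kappa> and M = "sqrt Nmax"])
    show "((\<lambda>t. u i k t) has_real_derivative U' i k t) (at t within {0..})" if "0 \<le> t" for t
      by (rule du'[OF i kk that])
    show "\<bar>U' i k t\<bar> \<le> B * exp (- \<kappa> * t)" if "0 \<le> t" for t
    proof -
      have "\<bar>U' i k t\<bar> \<le> (\<Sum>i<r. s i) * real m * \<epsilon> t * sqrt (N t)"
        by (rule U'_bound[OF sn i kk]) (use eb that in auto)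
      also have "\<dots> \<le> C0 * \<epsilon> t * sqrt (N t)" unfolding C0_def
        by (intro mult_right_mono mult_left_mono) (use Sp eps_nn N_nonneg in auto)
      finally show ?thesis using epsB[OF that] by linarith
    qed
    show "\<bar>u i k t\<bar> \<le> sqrt Nmax" if "0 \<le> t" for t using u_le_N[OF i kk, of t] sqN[OF that] by linarith
  qed (rule k)
  have vconv: "\<exists>l. ((\<lambda>t. v j k t) \<longlongrightarrow> l) at_top" if j: "j < m" and kk: "k < h" for j k
  proof (rule conv_lemma[where w' = "V' j k" and B = B and \<kappa> = \<kappa> and M = "sqrt Nmax"])
    show "((\<lambda>t. v j k t) has_real_derivative V' j k t) (at t within {0..})" if "0 \<le> t" for t
      by (rule dv'[OF j kk that])
    show "\<bar>V' j k t\<bar> \<le> B * exp (- \<kappa> * t)" if "0 \<le> t" for t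
    proof -
      have "\<bar>V' j k t\<bar> \<le> (\<Sum>i<r. s i) * real r * \<epsilon> t * sqrt (N t)"
        by (rule V'_bound[OF sn j kk]) (use eb that in auto)
      also have "\<dots> \<le> C0 * \<epsilon> t * sqrt (N t)" unfolding C0_def
        by (intro mult_right_mono mult_left_mono) (use Sp eps_nn N_nonneg in auto)
      finally show ?thesis using epsB[OF that] by linarith
    qed
    show "\<bar>v j k t\<bar> \<le> sqrt Nmax" if "0 \<le> t" for t using v_le_N[OF j kk, of t] sqN[OF that] by linarith
  qed (rule k)
  define ul where "ul i k = (SOME l. ((\<lambda>t. u i k t) \<longlongrightarrow> l) at_top)" for i k
  define vl where "vl j k = (SOME l. ((\<lambda>t. v j k t) \<longlongrightarrow> l) at_top)" for j k
  have ul: "((\<lambda>t. u i k t) \<longlongrightarrow> ul i k) at_top" if "i < r" "k < h" for i k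
    unfolding ul_def using uconv[OF that] by (rule someI_ex)
  have vl: "((\<lambda>t. v j k t) \<longlongrightarrow> vl j k) at_top" if "j < m" "k < h" for j k
    unfolding vl_def using vconv[OF that] by (rule someI_ex)
  have lim0: "wy i j - s i * (\<Sum>l<h. ul i l * vl j l) = 0" if i: "i < r" and j: "j < m" for i j
  proof -
    have eq: "(\<lambda>t. e i j t) = (\<lambda>t. wy i j - s i * (\<Sum>l<h. u i l t * v j l t))" using e_def by auto
    have t1: "((\<lambda>t. e i j t) \<longlongrightarrow> wy i j - s i * (\<Sum>l<h. ul i l * vl j l)) at_top"
      unfolding eq by (intro tendsto_intros ul vl i j) auto
    have epst: "(\<epsilon> \<longlongrightarrow> 0) at_top"
    proof -
      have "((\<lambda>t. sqrt (f 0) * exp (- \<kappa> * t)) \<longlongrightarrow> sqrt (f 0) * 0) at_top"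
        by (intro tendsto_intros exp_neg_tendsto k)
      then show ?thesis unfolding \<epsilon>_def[abs_def] by simp
    qed
    have t2: "((\<lambda>t. e i j t) \<longlongrightarrow> 0) at_top"
    proof (rule tendsto_sandwich[where f = "\<lambda>t. - \<epsilon> t" and h = \<epsilon>])
      show "\<forall>\<^sub>F t in at_top. - \<epsilon> t \<le> e i j t"
        unfolding eventually_at_top_linorder using eb[OF i j] by (intro exI[of _ 0]) (force simp: abs_le_iff)
      show "\<forall>\<^sub>F t in at_top. e i j t \<le> \<epsilon> t"
        unfolding eventually_at_top_linorder using eb[OF i j] by (intro exI[of _ 0]) (auto simp: abs_le_iff)
      show "((\<lambda>t. - \<epsilon> t) \<longlongrightarrow> 0) at_top" using tendsto_minus[OF epst] by simp
      show "(\<epsilon> \<longlongrightarrow> 0) at_top" by (rule epst)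
    qed
    show ?thesis using tendsto_unique[OF _ t1 t2] by simp
  qed
  show ?thesis using ul vl lim0 by blast
qed

end

lemma mult_entry:
  fixes A B :: "real mat"
  assumes "A \<in> carrier_mat p n" "B \<in> carrier_mat n q" "i < p" "j < q"
  shows "(A * B) $$ (i,j) = (\<Sum>l<n. A $$ (i,l) * B $$ (l,j))"
  using assms by (simp add: scalar_prod_def atLeast0LessThan)

lemma diag_sqrt_carrier: "Sx \<in> carrier_mat r r \<Longrightarrow> diag_sqrt Sx \<in> carrier_mat r r"
  unfolding diag_sqrt_def by auto

lemma SA_entry:
  fixes Sx A :: "real mat"
  assumes Sx: "Sx \<in> carrier_mat r r" and A: "A \<in> carrier_mat r n" and i: "i < r" and j: "j < n"
  shows "(diag_sqrt Sx * A) $$ (i,j) = sqrt (Sx $$ (i,i)) * A $$ (i,j)"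
proof -
  have "(diag_sqrt Sx * A) $$ (i,j) = (\<Sum>l<r. diag_sqrt Sx $$ (i,l) * A $$ (l,j))"
    by (rule mult_entry[OF diag_sqrt_carrier[OF Sx] A i j])
  also have "\<dots> = (\<Sum>l<r. if l = i then sqrt (Sx $$ (i,i)) * A $$ (l,j) else 0)"
    by (rule sum.cong) (use Sx i in \<open>auto simp: diag_sqrt_def\<close>)
  also have "\<dots> = sqrt (Sx $$ (i,i)) * A $$ (i,j)" using i by simp
  finally show ?thesis .
qed

lemma AS_entry:
  fixes Sx A :: "real mat"
  assumes Sx: "Sx \<in> carrier_mat r r" and A: "A \<in> carrier_mat n r" and i: "i < n" and j: "j < r"
  shows "(A * diag_sqrt Sx) $$ (i,j) = A $$ (i,j) * sqrt (Sx $$ (j,j))"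
proof -
  have "(A * diag_sqrt Sx) $$ (i,j) = (\<Sum>l<r. A $$ (i,l) * diag_sqrt Sx $$ (l,j))"
    by (rule mult_entry[OF A diag_sqrt_carrier[OF Sx] i j])
  also have "\<dots> = (\<Sum>l<r. if l = j then A $$ (i,l) * sqrt (Sx $$ (j,j)) else 0)"
    by (rule sum.cong) (use Sx j in \<open>auto simp: diag_sqrt_def\<close>)
  also have "\<dots> = A $$ (i,j) * sqrt (Sx $$ (j,j))" using j by simp
  finally show ?thesis .
qed

lemma err_carrier:
  assumes W: "W \<in> carrier_mat n r" and Y: "Y \<in> carrier_mat n m" and Sx: "Sx \<in> carrier_mat r r"
    and V: "V \<in> carrier_mat m h" and U: "U \<in> carrier_mat r h"
  shows "err W Y Sx V U \<in> carrier_mat r m"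
  unfolding err_def using W Y Sx V U diag_sqrt_carrier[OF Sx] by auto

lemma err_entry:
  assumes W: "W \<in> carrier_mat n r" and Y: "Y \<in> carrier_mat n m" and Sx: "Sx \<in> carrier_mat r r"
    and V: "V \<in> carrier_mat m h" and U: "U \<in> carrier_mat r h" and i: "i < r" and j: "j < m"
  shows "err W Y Sx V U $$ (i,j) = (W\<^sup>T * Y) $$ (i,j) - sqrt (Sx $$ (i,i)) * (\<Sum>l<h. U $$ (i,l) * V $$ (j,l))"
proof -
  have SU: "diag_sqrt Sx * U \<in> carrier_mat r h" using diag_sqrt_carrier[OF Sx] U by auto
  have "(diag_sqrt Sx * U * V\<^sup>T) $$ (i,j) = (\<Sum>l<h. (diag_sqrt Sx * U) $$ (i,l) * V\<^sup>T $$ (l,j))"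
    by (rule mult_entry[OF SU _ i j]) (use V in auto)
  also have "\<dots> = (\<Sum>l<h. sqrt (Sx $$ (i,i)) * (U $$ (i,l) * V $$ (j,l)))"
    by (rule sum.cong) (use SA_entry[OF Sx U i] V j in auto)
  also have "\<dots> = sqrt (Sx $$ (i,i)) * (\<Sum>l<h. U $$ (i,l) * V $$ (j,l))" by (simp add: sum_distrib_left)
  finally have e: "(diag_sqrt Sx * U * V\<^sup>T) $$ (i,j) = sqrt (Sx $$ (i,i)) * (\<Sum>l<h. U $$ (i,l) * V $$ (j,l))" .
  show ?thesis unfolding err_def using e W Y Sx V U diag_sqrt_carrier[OF Sx] i j by simp
qed

lemma eig_lower_sum:
  fixes A B :: "real mat"
  assumes A: "A \<in> carrier_mat p h" and B: "B \<in> carrier_mat q h"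
    and pos: "0 < lam (A\<^sup>T * A - B\<^sup>T * B) p"
  shows "lam (A\<^sup>T * A - B\<^sup>T * B) p * (\<Sum>i<p. (x i)\<^sup>2) \<le> (\<Sum>k<h. (\<Sum>i<p. A $$ (i,k) * x i)\<^sup>2)"
proof -
  define xv where "xv = vec p x"
  have xv: "xv \<in> carrier_vec p" unfolding xv_def by auto
  have "xv \<bullet> xv = (\<Sum>i<p. (x i)\<^sup>2)" unfolding xv_def scalar_prod_def
    by (simp add: atLeast0LessThan power2_eq_square)
  moreover have "(A\<^sup>T *\<^sub>v xv) \<bullet> (A\<^sup>T *\<^sub>v xv) = (\<Sum>k<h. (\<Sum>i<p. A $$ (i,k) * x i)\<^sup>2)"
  proof -
    have "\<And>k. k < h \<Longrightarrow> (A\<^sup>T *\<^sub>v xv) $ k = (\<Sum>i<p. A $$ (i,k) * x i)"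
      unfolding xv_def using A by (simp add: scalar_prod_def atLeast0LessThan)
    moreover have "dim_vec (A\<^sup>T *\<^sub>v xv) = h" using A by simp
    ultimately show ?thesis unfolding scalar_prod_def
      by (simp add: atLeast0LessThan power2_eq_square del: index_mult_mat_vec)
  qed
  ultimately show ?thesis using eig_lower[OF A B pos xv] by simp
qed

definition fip :: "nat \<Rightarrow> nat \<Rightarrow> real mat \<Rightarrow> real mat \<Rightarrow> real" where
  "fip n m A B = (\<Sum>i<n. \<Sum>j<m. A $$ (i,j) * B $$ (i,j))"

lemma frob_fip: "A \<in> carrier_mat n m \<Longrightarrow> frob_sq A = fip n m A A"
  unfolding frob_sq_def fip_def by (simp add: power2_eq_square)

lemma fip_mult:
  fixes A W E :: "real mat"
  assumes A: "A \<in> carrier_mat n m" and W: "W \<in> carrier_mat n r" and E: "E \<in> carrier_mat r m"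
  shows "fip n m A (W * E) = fip r m (W\<^sup>T * A) E"
proof -
  have "fip n m A (W * E) = (\<Sum>a<n. \<Sum>j<m. A $$ (a,j) * (\<Sum>i<r. W $$ (a,i) * E $$ (i,j)))"
    unfolding fip_def by (intro sum.cong refl) (use A W E mult_entry[OF W E] in auto)
  also have "\<dots> = (\<Sum>a<n. \<Sum>j<m. \<Sum>i<r. A $$ (a,j) * W $$ (a,i) * E $$ (i,j))"
    by (simp add: sum_distrib_left mult_ac)
  also have "\<dots> = (\<Sum>j<m. \<Sum>a<n. \<Sum>i<r. A $$ (a,j) * W $$ (a,i) * E $$ (i,j))" by (rule sum.swap)
  also have "\<dots> = (\<Sum>j<m. \<Sum>i<r. \<Sum>a<n. A $$ (a,j) * W $$ (a,i) * E $$ (i,j))"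
    by (intro sum.cong refl sum.swap)
  also have "\<dots> = (\<Sum>i<r. \<Sum>j<m. \<Sum>a<n. A $$ (a,j) * W $$ (a,i) * E $$ (i,j))" by (rule sum.swap)
  also have "\<dots> = (\<Sum>i<r. \<Sum>j<m. (\<Sum>a<n. W $$ (a,i) * A $$ (a,j)) * E $$ (i,j))"
    by (intro sum.cong refl) (simp add: sum_distrib_left sum_distrib_right mult_ac)
  also have "\<dots> = fip r m (W\<^sup>T * A) E"
    unfolding fip_def by (intro sum.cong refl) (use A W mult_entry[of "W\<^sup>T" r n A m] in auto)
  finally show ?thesis .
qed

lemma fip_add:
  fixes A B :: "real mat"
  assumes A: "A \<in> carrier_mat n m" and B: "B \<in> carrier_mat n m"
  shows "fip n m (A + B) (A + B) = fip n m A A + 2 * fip n m A B + fip n m B B"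
proof -
  have "fip n m (A + B) (A + B) = (\<Sum>i<n. \<Sum>j<m. A $$ (i,j) * A $$ (i,j) + 2 * (A $$ (i,j) * B $$ (i,j)) + B $$ (i,j) * B $$ (i,j))"
    unfolding fip_def by (intro sum.cong refl) (use A B in \<open>auto simp: algebra_simps\<close>)
  then show ?thesis unfolding fip_def by (simp add: sum.distrib sum_distrib_left)
qed

lemma fip_zero: "fip n m (0\<^sub>m r m) E = 0" if "n \<le> r" for E :: "real mat"
  unfolding fip_def using that by (intro sum.neutral) auto

lemma append_cols_carrier: "A \<in> carrier_mat n a \<Longrightarrow> B \<in> carrier_mat n b \<Longrightarrow> append_cols A B \<in> carrier_mat n (a + b)"
  unfolding append_cols_def by auto

lemma append_cols_entry: "A \<in> carrier_mat n a \<Longrightarrow> B \<in> carrier_mat n b \<Longrightarrow> i < n \<Longrightarrow> j < a + b \<Longrightarrow>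
  append_cols A B $$ (i,j) = (if j < a then A $$ (i,j) else B $$ (i, j - a))"
  unfolding append_cols_def by auto

lemma loss_identity:
  fixes X Y W Sx Phi1 Phi2 U2 V U :: "real mat"
  assumes X: "X \<in> carrier_mat n D" and Y: "Y \<in> carrier_mat n m" and rD: "r \<le> D"
    and W: "W \<in> carrier_mat n r" and Wort: "W\<^sup>T * W = 1\<^sub>m r"
    and Sx: "Sx \<in> carrier_mat r r"
    and Phi1: "Phi1 \<in> carrier_mat D r" and Phi2: "Phi2 \<in> carrier_mat D (D - r)"
    and Phiort: "(append_cols Phi1 Phi2)\<^sup>T * append_cols Phi1 Phi2 = 1\<^sub>m D"
    and svd: "X = W * append_cols (diag_sqrt Sx) (0\<^sub>m r (D - r)) * (append_cols Phi1 Phi2)\<^sup>T"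
    and U2: "U2 \<in> carrier_mat (D - r) h" and V: "V \<in> carrier_mat m h" and U: "U \<in> carrier_mat r h"
  shows "frob_sq (Y - X * (Phi1 * U + Phi2 * U2) * V\<^sup>T) = frob_sq ((1\<^sub>m n - W * W\<^sup>T) * Y) + frob_sq (err W Y Sx V U)"
proof -
  define Phi where "Phi = append_cols Phi1 Phi2"
  define S where "S = diag_sqrt Sx"
  define Z where "Z = append_cols S (0\<^sub>m r (D - r))"
  have S: "S \<in> carrier_mat r r" unfolding S_def by (rule diag_sqrt_carrier[OF Sx])
  have Phi: "Phi \<in> carrier_mat D D" unfolding Phi_def using append_cols_carrier[OF Phi1 Phi2] rD by simp
  have Z: "Z \<in> carrier_mat r D" unfolding Z_def using append_cols_carrier[OF S, of "0\<^sub>m r (D - r)" "D - r"] rD by simp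
  have Phie: "Phi $$ (a,b) = (if b < r then Phi1 $$ (a,b) else Phi2 $$ (a, b - r))" if "a < D" "b < D" for a b
    unfolding Phi_def using append_cols_entry[OF Phi1 Phi2] that rD by simp
  have Ze: "Z $$ (i,b) = (if b < r then S $$ (i,b) else 0)" if "i < r" "b < D" for i b
    unfolding Z_def using append_cols_entry[OF S, of "0\<^sub>m r (D - r)" "D - r"] that rD by simp
  have O: "(\<Sum>l<D. Phi $$ (l,a) * Phi $$ (l,b)) = (if a = b then 1 else 0)" if "a < D" "b < D" for a b
  proof -
    have "(Phi\<^sup>T * Phi) $$ (a,b) = (\<Sum>l<D. Phi\<^sup>T $$ (a,l) * Phi $$ (l,b))"
      by (rule mult_entry[of _ D D _ D]) (use Phi that in auto)
    also have "\<dots> = (\<Sum>l<D. Phi $$ (l,a) * Phi $$ (l,b))" by (intro sum.cong refl) (use Phi that in auto)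
    finally show ?thesis using Phiort that unfolding Phi_def[symmetric] by simp
  qed
  have PT1: "Phi\<^sup>T * Phi1 = mat D r (\<lambda>(a,b). if a = b then 1 else 0)"
  proof (rule eq_matI)
    fix a b assume ab: "a < dim_row (mat D r (\<lambda>(a,b). if a = b then 1 else (0::real)))"
      "b < dim_col (mat D r (\<lambda>(a,b). if a = b then 1 else (0::real)))"
    then have a: "a < D" and b: "b < r" by auto
    have "(Phi\<^sup>T * Phi1) $$ (a,b) = (\<Sum>l<D. Phi\<^sup>T $$ (a,l) * Phi1 $$ (l,b))"
      by (rule mult_entry[of _ D D _ r]) (use Phi Phi1 a b in auto)
    also have "\<dots> = (\<Sum>l<D. Phi $$ (l,a) * Phi $$ (l,b))"
      by (intro sum.cong refl) (use Phi a b rD Phie in auto)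
    also have "\<dots> = (if a = b then 1 else 0)" using O a b rD by simp
    finally show "(Phi\<^sup>T * Phi1) $$ (a,b) = mat D r (\<lambda>(a,b). if a = b then 1 else 0) $$ (a,b)" using a b by simp
  qed (use Phi Phi1 in auto)
  have PT2: "Phi\<^sup>T * Phi2 = mat D (D - r) (\<lambda>(a,b). if a = b + r then 1 else 0)"
  proof (rule eq_matI)
    fix a b assume ab: "a < dim_row (mat D (D - r) (\<lambda>(a,b). if a = b + r then 1 else (0::real)))"
      "b < dim_col (mat D (D - r) (\<lambda>(a,b). if a = b + r then 1 else (0::real)))"
    then have a: "a < D" and b: "b < D - r" by auto
    have "(Phi\<^sup>T * Phi2) $$ (a,b) = (\<Sum>l<D. Phi\<^sup>T $$ (a,l) * Phi2 $$ (l,b))"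
      by (rule mult_entry[of _ D D _ "D - r"]) (use Phi Phi2 a b in auto)
    also have "\<dots> = (\<Sum>l<D. Phi $$ (l,a) * Phi $$ (l,b + r))"
      by (intro sum.cong refl) (use Phi a b rD Phie in auto)
    also have "\<dots> = (if a = b + r then 1 else 0)" using O a b rD by simp
    finally show "(Phi\<^sup>T * Phi2) $$ (a,b) = mat D (D - r) (\<lambda>(a,b). if a = b + r then 1 else 0) $$ (a,b)" using a b by simp
  qed (use Phi Phi2 in auto)
  have ZJ1: "Z * (Phi\<^sup>T * Phi1) = S"
  proof (rule eq_matI)
    fix i b assume "i < dim_row S" "b < dim_col S"
    then have i: "i < r" and b: "b < r" using S by auto
    have "(Z * (Phi\<^sup>T * Phi1)) $$ (i,b) = (\<Sum>a<D. Z $$ (i,a) * (Phi\<^sup>T * Phi1) $$ (a,b))"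
      by (rule mult_entry[of _ r D _ r]) (use Z Phi Phi1 i b in auto)
    also have "\<dots> = (\<Sum>a<D. if a = b then Z $$ (i,a) else 0)"
      unfolding PT1 by (intro sum.cong refl) (use b in auto)
    also have "\<dots> = S $$ (i,b)" using b rD Ze[OF i] by simp
    finally show "(Z * (Phi\<^sup>T * Phi1)) $$ (i,b) = S $$ (i,b)" .
  qed (use Z Phi Phi1 S in auto)
  have ZJ2: "Z * (Phi\<^sup>T * Phi2) = 0\<^sub>m r (D - r)"
  proof (rule eq_matI)
    fix i b assume "i < dim_row (0\<^sub>m r (D - r) :: real mat)" "b < dim_col (0\<^sub>m r (D - r) :: real mat)"
    then have i: "i < r" and b: "b < D - r" by auto
    have "(Z * (Phi\<^sup>T * Phi2)) $$ (i,b) = (\<Sum>a<D. Z $$ (i,a) * (Phi\<^sup>T * Phi2) $$ (a,b))"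
      by (rule mult_entry[of _ r D _ "D - r"]) (use Z Phi Phi2 i b in auto)
    also have "\<dots> = (\<Sum>a<D. if a = b + r then Z $$ (i,a) else 0)"
      unfolding PT2 by (intro sum.cong refl) (use b in auto)
    also have "\<dots> = 0" using b rD Ze[OF i] by simp
    finally show "(Z * (Phi\<^sup>T * Phi2)) $$ (i,b) = 0\<^sub>m r (D - r) $$ (i,b)" using i b by simp
  qed (use Z Phi Phi2 in auto)
  have XPhi1: "X * Phi1 = W * S"
  proof -
    have "X * Phi1 = ((W * Z) * Phi\<^sup>T) * Phi1" unfolding svd Phi_def[symmetric] S_def[symmetric] Z_def[symmetric] ..
    also have "\<dots> = (W * Z) * (Phi\<^sup>T * Phi1)" by (rule assoc_mult_mat) (use W Z Phi Phi1 in auto)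
    also have "\<dots> = W * (Z * (Phi\<^sup>T * Phi1))" by (rule assoc_mult_mat) (use W Z Phi Phi1 in auto)
    finally have "X * Phi1 = W * (Z * (Phi\<^sup>T * Phi1))" .
    then show ?thesis unfolding ZJ1 .
  qed
  have XPhi2: "X * Phi2 = 0\<^sub>m n (D - r)"
  proof -
    have "X * Phi2 = ((W * Z) * Phi\<^sup>T) * Phi2" unfolding svd Phi_def[symmetric] S_def[symmetric] Z_def[symmetric] ..
    also have "\<dots> = (W * Z) * (Phi\<^sup>T * Phi2)" by (rule assoc_mult_mat) (use W Z Phi Phi2 in auto)
    also have "\<dots> = W * (Z * (Phi\<^sup>T * Phi2))" by (rule assoc_mult_mat) (use W Z Phi Phi2 in auto)
    finally have "X * Phi2 = W * (Z * (Phi\<^sup>T * Phi2))" .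
    then show ?thesis unfolding ZJ2 using W by simp
  qed
  have XU: "X * (Phi1 * U + Phi2 * U2) = W * S * U"
  proof -
    have "X * (Phi1 * U + Phi2 * U2) = X * (Phi1 * U) + X * (Phi2 * U2)"
      by (rule mult_add_distrib_mat[OF X]) (use Phi1 Phi2 U U2 in auto)
    also have "X * (Phi1 * U) = (X * Phi1) * U" using X Phi1 U by (simp add: assoc_mult_mat[of _ n D _ r _ h])
    also have "X * (Phi2 * U2) = (X * Phi2) * U2" using X Phi2 U2 by (simp add: assoc_mult_mat[of _ n D _ "D - r" _ h])
    finally show ?thesis unfolding XPhi1 XPhi2 using W S U U2 by simp
  qed
  define E where "E = err W Y Sx V U"
  have E: "E \<in> carrier_mat r m" unfolding E_def by (rule err_carrier[OF W Y Sx V U])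
  define M where "M = S * U * V\<^sup>T"
  have M: "M \<in> carrier_mat r m" unfolding M_def using S U V by auto
  have Edef: "E = W\<^sup>T * Y - M" unfolding E_def err_def M_def S_def ..
  define A0 where "A0 = (1\<^sub>m n - W * W\<^sup>T) * Y"
  have A0: "A0 \<in> carrier_mat n m" unfolding A0_def using W Y by auto
  have A0': "A0 = Y - W * (W\<^sup>T * Y)"
  proof -
    have "A0 = 1\<^sub>m n * Y - (W * W\<^sup>T) * Y" unfolding A0_def
      by (rule minus_mult_distrib_mat) (use W Y in auto)
    then show ?thesis using W Y by (simp add: assoc_mult_mat[of _ n r _ n _ m])
  qed
  have R: "Y - X * (Phi1 * U + Phi2 * U2) * V\<^sup>T = A0 + W * E"
  proof -
    have lhs: "Y - X * (Phi1 * U + Phi2 * U2) * V\<^sup>T = Y - W * M"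
      unfolding XU M_def using W S U V by (simp add: assoc_mult_mat[of _ n r _ r _ h] assoc_mult_mat[of _ n r _ h _ m])
    show ?thesis unfolding lhs
    proof (rule eq_matI)
      fix a j assume "a < dim_row (A0 + W * E)" "j < dim_col (A0 + W * E)"
      then have a: "a < n" and j: "j < m" using A0 W E by auto
      have "(W * E) $$ (a,j) = (\<Sum>i<r. W $$ (a,i) * E $$ (i,j))" by (rule mult_entry[OF W E a j])
      also have "\<dots> = (\<Sum>i<r. W $$ (a,i) * (W\<^sup>T * Y) $$ (i,j)) - (\<Sum>i<r. W $$ (a,i) * M $$ (i,j))"
        unfolding Edef using W Y M j by (simp add: sum_subtractf[symmetric] right_diff_distrib)
      also have "\<dots> = (W * (W\<^sup>T * Y)) $$ (a,j) - (W * M) $$ (a,j)"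
        using mult_entry[OF W _ a j, of "W\<^sup>T * Y"] mult_entry[OF W M a j] W Y by simp
      finally have "(W * E) $$ (a,j) = (W * (W\<^sup>T * Y)) $$ (a,j) - (W * M) $$ (a,j)" .
      then show "(Y - W * M) $$ (a,j) = (A0 + W * E) $$ (a,j)"
        unfolding A0' using a j W Y M E by simp
    qed (use A0 W E M Y in auto)
  qed
  have WA0: "W\<^sup>T * A0 = 0\<^sub>m r m"
  proof -
    have "W\<^sup>T * A0 = W\<^sup>T * Y - W\<^sup>T * (W * (W\<^sup>T * Y))" unfolding A0'
      by (rule mult_minus_distrib_mat) (use W Y in auto)
    also have "W\<^sup>T * (W * (W\<^sup>T * Y)) = (W\<^sup>T * W) * (W\<^sup>T * Y)"
      using W Y by (simp add: assoc_mult_mat[of _ r n _ r _ m])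
    also have "\<dots> = W\<^sup>T * Y" unfolding Wort using W Y by simp
    finally show ?thesis using W Y by (intro eq_matI) auto
  qed
  have WWE: "W\<^sup>T * (W * E) = E"
    using W E Wort by (simp add: assoc_mult_mat[of _ r n _ r _ m, symmetric])
  have WE: "W * E \<in> carrier_mat n m" using W E by auto
  have "frob_sq (A0 + W * E) = fip n m (A0 + W * E) (A0 + W * E)" by (rule frob_fip) (use A0 WE in auto)
  also have "\<dots> = fip n m A0 A0 + 2 * fip n m A0 (W * E) + fip n m (W * E) (W * E)"
    by (rule fip_add[OF A0 WE])
  also have "fip n m A0 (W * E) = 0" unfolding fip_mult[OF A0 W E] WA0 by (rule fip_zero) simp
  also have "fip n m (W * E) (W * E) = fip r m E E" unfolding fip_mult[OF WE W E] WWE ..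
  also have "fip n m A0 A0 = frob_sq A0" by (rule frob_fip[symmetric, OF A0])
  also have "fip r m E E = frob_sq E" by (rule frob_fip[symmetric, OF E])
  finally show ?thesis unfolding R A0_def[symmetric] E_def[symmetric] by simp
qed

theorem theorem1:
  fixes X Y W Sx Phi1 Phi2 U2 :: "real mat"
    and V U1 :: "real \<Rightarrow> real mat"
    and n D m h r :: nat
  assumes X: "X \<in> carrier_mat n D" and Y: "Y \<in> carrier_mat n m"
    and Dn: "D > n" and rn: "n \<ge> r" and rk: "r = vec_space.rank n X"
    and hpos: "h > 0" and hmin: "h \<ge> min m D"
    and W: "W \<in> carrier_mat n r" and Wort: "W\<^sup>T * W = 1\<^sub>m r"
    and Sx: "Sx \<in> carrier_mat r r" and Sxdiag: "diagonal_mat Sx"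
    and Sxpos: "\<forall>i<r. Sx $$ (i,i) > 0"
    and Phi1: "Phi1 \<in> carrier_mat D r" and Phi2: "Phi2 \<in> carrier_mat D (D - r)"
    and Phiort: "(append_cols Phi1 Phi2)\<^sup>T * append_cols Phi1 Phi2 = 1\<^sub>m D"
    and svd: "X = W * append_cols (diag_sqrt Sx) (0\<^sub>m r (D - r)) * (append_cols Phi1 Phi2)\<^sup>T"
    and U2: "U2 \<in> carrier_mat (D - r) h"
    and Vc: "\<forall>t\<ge>0. V t \<in> carrier_mat m h"
    and U1c: "\<forall>t\<ge>0. U1 t \<in> carrier_mat r h"
    and odeV: "\<forall>t\<ge>0. mat_has_deriv V
                 ((err W Y Sx (V t) (U1 t))\<^sup>T * diag_sqrt Sx * U1 t) (at t within {0..})"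
    and odeU1: "\<forall>t\<ge>0. mat_has_deriv U1
                 (diag_sqrt Sx * err W Y Sx (V t) (U1 t) * V t) (at t within {0..})"
  defines "L \<equiv> (\<lambda>t. frob_sq (Y - X * (Phi1 * U1 t + Phi2 * U2) * (V t)\<^sup>T) / 2)"
    and "Lstar \<equiv> frob_sq ((1\<^sub>m n - W * W\<^sup>T) * Y) / 2"
    and "c \<equiv> (if h < r then 0 else pos_part (lam ((U1 0)\<^sup>T * U1 0 - (V 0)\<^sup>T * V 0) r))
             + (if h < m then 0 else pos_part (lam (- ((U1 0)\<^sup>T * U1 0 - (V 0)\<^sup>T * V 0)) m))"
  shows "(\<forall>t>0. L t - Lstar \<le> exp (- 2 * lam Sx r * c * t) * (L 0 - Lstar))
       \<and> (h \<ge> m + r \<longrightarrow> c = lam ((U1 0)\<^sup>T * U1 0 - (V 0)\<^sup>T * V 0) r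
                          + lam (- ((U1 0)\<^sup>T * U1 0 - (V 0)\<^sup>T * V 0)) m)
       \<and> (c > 0 \<longrightarrow> (\<exists>Vinf U1inf. Vinf \<in> carrier_mat m h \<and> U1inf \<in> carrier_mat r h
              \<and> mat_tendsto_at_top V Vinf \<and> mat_tendsto_at_top U1 U1inf
              \<and> err W Y Sx Vinf U1inf = 0\<^sub>m r m))"
proof -
  have rD: "r \<le> D" using rn Dn by simp
  define S where "S = diag_sqrt Sx"
  have S: "S \<in> carrier_mat r r" unfolding S_def by (rule diag_sqrt_carrier[OF Sx])
  define s where "s i = sqrt (Sx $$ (i,i))" for i
  define WY where "WY = W\<^sup>T * Y"
  define u where "u i k t = U1 t $$ (i,k)" for i k t
  define v where "v j k t = V t $$ (j,k)" for j k t
  define e where "e i j t = WY $$ (i,j) - s i * (\<Sum>l<h. u i l t * v j l t)" for i j t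
  define Lam0 where "Lam0 = (U1 0)\<^sup>T * U1 0 - (V 0)\<^sup>T * V 0"
  have sn: "0 \<le> s i" if "i < r" for i unfolding s_def using Sxpos that by (simp add: less_imp_le)
  have Vt: "V t \<in> carrier_mat m h" if "0 \<le> t" for t using Vc that by blast
  have Ut: "U1 t \<in> carrier_mat r h" if "0 \<le> t" for t using U1c that by blast
  have Ec: "err W Y Sx (V t) (U1 t) \<in> carrier_mat r m" if "0 \<le> t" for t
    by (rule err_carrier[OF W Y Sx Vt[OF that] Ut[OF that]])
  have Ee: "err W Y Sx (V t) (U1 t) $$ (i,j) = e i j t" if "0 \<le> t" "i < r" "j < m" for t i j
    unfolding e_def s_def u_def v_def WY_def by (rule err_entry[OF W Y Sx Vt[OF that(1)] Ut[OF that(1)] that(2,3)])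
  have dUe: "(S * err W Y Sx (V t) (U1 t) * V t) $$ (i,k) = s i * (\<Sum>j<m. e i j t * v j k t)"
    if "0 \<le> t" "i < r" "k < h" for t i k
  proof -
    have SE: "S * err W Y Sx (V t) (U1 t) \<in> carrier_mat r m" using S Ec[OF that(1)] by auto
    have "(S * err W Y Sx (V t) (U1 t) * V t) $$ (i,k) = (\<Sum>j<m. (S * err W Y Sx (V t) (U1 t)) $$ (i,j) * V t $$ (j,k))"
      by (rule mult_entry[OF SE Vt[OF that(1)] that(2,3)])
    also have "\<dots> = (\<Sum>j<m. s i * (e i j t * v j k t))"
      by (intro sum.cong refl) (use SA_entry[OF Sx Ec[OF that(1)] that(2)] Ee[OF that(1,2)] in \<open>auto simp: S_def s_def v_def\<close>)
    finally show ?thesis by (simp add: sum_distrib_left)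
  qed
  have dVe: "((err W Y Sx (V t) (U1 t))\<^sup>T * S * U1 t) $$ (j,k) = (\<Sum>i<r. e i j t * s i * u i k t)"
    if "0 \<le> t" "j < m" "k < h" for t j k
  proof -
    have ET: "(err W Y Sx (V t) (U1 t))\<^sup>T \<in> carrier_mat m r" using Ec[OF that(1)] by auto
    have ES: "(err W Y Sx (V t) (U1 t))\<^sup>T * S \<in> carrier_mat m r" using S ET by auto
    have "((err W Y Sx (V t) (U1 t))\<^sup>T * S * U1 t) $$ (j,k) = (\<Sum>i<r. ((err W Y Sx (V t) (U1 t))\<^sup>T * S) $$ (j,i) * U1 t $$ (i,k))"
      by (rule mult_entry[OF ES Ut[OF that(1)] that(2,3)])
    also have "\<dots> = (\<Sum>i<r. e i j t * s i * u i k t)"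
    proof (intro sum.cong refl)
      fix i assume i: "i \<in> {..<r}"
      have "(err W Y Sx (V t) (U1 t))\<^sup>T $$ (j,i) = e i j t" using Ee[OF that(1) _ that(2), of i] Ec[OF that(1)] i that(2) by auto
      then show "((err W Y Sx (V t) (U1 t))\<^sup>T * S) $$ (j,i) * U1 t $$ (i,k) = e i j t * s i * u i k t"
        using AS_entry[OF Sx ET that(2), of i] i unfolding S_def s_def u_def by auto
    qed
    finally show ?thesis .
  qed
  interpret fl: flow r m h s "\<lambda>i j. WY $$ (i,j)" u v e
  proof (unfold_locales)
    show "e i j t = WY $$ (i,j) - s i * (\<Sum>l<h. u i l t * v j l t)" for i j t by (rule e_def)
  next
    fix i k :: nat and t :: real
    assume i: "i < r" and k: "k < h" and t: "0 \<le> t"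
    have F: "S * err W Y Sx (V t) (U1 t) * V t \<in> carrier_mat r h" using S Ec[OF t] Vt[OF t] by auto
    have "mat_has_deriv U1 (S * err W Y Sx (V t) (U1 t) * V t) (at t within {0..})"
      using odeU1 t unfolding S_def by blast
    then have "((\<lambda>t. U1 t $$ (i,k)) has_real_derivative (S * err W Y Sx (V t) (U1 t) * V t) $$ (i,k)) (at t within {0..})"
    proof -
      have dims: "dim_row (S * err W Y Sx (V t) (U1 t) * V t) = r" "dim_col (S * err W Y Sx (V t) (U1 t) * V t) = h" using F by auto
      from \<open>mat_has_deriv U1 (S * err W Y Sx (V t) (U1 t) * V t) (at t within {0..})\<close> show ?thesis
        using i k by (simp only: mat_has_deriv_def dims)
    qed
    then show "((\<lambda>t. u i k t) has_real_derivative s i * (\<Sum>j<m. e i j t * v j k t)) (at t within {0..})"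
      unfolding u_def dUe[OF t i k] .
  next
    fix j k :: nat and t :: real
    assume j: "j < m" and k: "k < h" and t: "0 \<le> t"
    have F: "(err W Y Sx (V t) (U1 t))\<^sup>T * S * U1 t \<in> carrier_mat m h" using S Ec[OF t] Ut[OF t] by auto
    have "mat_has_deriv V ((err W Y Sx (V t) (U1 t))\<^sup>T * S * U1 t) (at t within {0..})"
      using odeV t unfolding S_def by blast
    then have "((\<lambda>t. V t $$ (j,k)) has_real_derivative ((err W Y Sx (V t) (U1 t))\<^sup>T * S * U1 t) $$ (j,k)) (at t within {0..})"
    proof -
      have dims: "dim_row ((err W Y Sx (V t) (U1 t))\<^sup>T * S * U1 t) = m" "dim_col ((err W Y Sx (V t) (U1 t))\<^sup>T * S * U1 t) = h" using F by auto
      from \<open>mat_has_deriv V ((err W Y Sx (V t) (U1 t))\<^sup>T * S * U1 t) (at t within {0..})\<close> show ?thesis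
        using j k by (simp only: mat_has_deriv_def dims)
    qed
    then show "((\<lambda>t. v j k t) has_real_derivative (\<Sum>i<r. e i j t * s i * u i k t)) (at t within {0..})"
      unfolding v_def dVe[OF t j k] .
  qed
  have Lf: "L t - Lstar = fl.f t / 2" if t: "0 \<le> t" for t
  proof -
    have "frob_sq (Y - X * (Phi1 * U1 t + Phi2 * U2) * (V t)\<^sup>T) = frob_sq ((1\<^sub>m n - W * W\<^sup>T) * Y) + frob_sq (err W Y Sx (V t) (U1 t))"
      by (rule loss_identity[OF X Y rD W Wort Sx Phi1 Phi2 Phiort svd U2 Vt[OF t] Ut[OF t]])
    moreover have "frob_sq (err W Y Sx (V t) (U1 t)) = fl.f t"
      unfolding frob_sq_def fl.f_def using Ec[OF t] Ee[OF t] by simp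
    ultimately show ?thesis unfolding L_def Lstar_def by (simp add: field_simps)
  qed
  have Lamt: "(U1 t)\<^sup>T * U1 t - (V t)\<^sup>T * V t = Lam0" if t: "0 \<le> t" for t
  proof -
    have ent: "((U1 t)\<^sup>T * U1 t - (V t)\<^sup>T * V t) $$ (k,l) = fl.P k l t" if "0 \<le> t" "k < h" "l < h" for t k l
    proof -
      have "((U1 t)\<^sup>T * U1 t) $$ (k,l) = (\<Sum>i<r. (U1 t)\<^sup>T $$ (k,i) * U1 t $$ (i,l))"
        by (rule mult_entry[of _ h r _ h]) (use Ut[OF that(1)] that in auto)
      also have "\<dots> = (\<Sum>i<r. u i k t * u i l t)" by (intro sum.cong refl) (use Ut[OF that(1)] that in \<open>auto simp: u_def\<close>)
      finally have a: "((U1 t)\<^sup>T * U1 t) $$ (k,l) = (\<Sum>i<r. u i k t * u i l t)" .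
      have "((V t)\<^sup>T * V t) $$ (k,l) = (\<Sum>j<m. (V t)\<^sup>T $$ (k,j) * V t $$ (j,l))"
        by (rule mult_entry[of _ h m _ h]) (use Vt[OF that(1)] that in auto)
      also have "\<dots> = (\<Sum>j<m. v j k t * v j l t)" by (intro sum.cong refl) (use Vt[OF that(1)] that in \<open>auto simp: v_def\<close>)
      finally have b: "((V t)\<^sup>T * V t) $$ (k,l) = (\<Sum>j<m. v j k t * v j l t)" .
      show ?thesis unfolding fl.P_def using a b Ut[OF that(1)] Vt[OF that(1)] that by simp
    qed
    show ?thesis unfolding Lam0_def
    proof (rule eq_matI)
      fix k l assume "k < dim_row ((U1 0)\<^sup>T * U1 0 - (V 0)\<^sup>T * V 0)" "l < dim_col ((U1 0)\<^sup>T * U1 0 - (V 0)\<^sup>T * V 0)"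
      then have k: "k < h" and l: "l < h" using Vt[of 0] by auto
      show "((U1 t)\<^sup>T * U1 t - (V t)\<^sup>T * V t) $$ (k,l) = ((U1 0)\<^sup>T * U1 0 - (V 0)\<^sup>T * V 0) $$ (k,l)"
        using ent[OF t k l] ent[of 0 k l] k l fl.P_const[OF k l t] by simp
    qed (use Vt[OF t] Vt[of 0] in auto)
  qed
  define a1 where "a1 = (if h < r then 0 else pos_part (lam Lam0 r))"
  define a2 where "a2 = (if h < m then 0 else pos_part (lam (- Lam0) m))"
  have c_eq: "c = a1 + a2" unfolding c_def a1_def a2_def Lam0_def ..
  have a1nn: "0 \<le> a1" unfolding a1_def pos_part_def by simp
  have a2nn: "0 \<le> a2" unfolding a2_def pos_part_def by simp
  have cnn: "0 \<le> c" using a1nn a2nn c_eq by simp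
  have lSx: "0 \<le> lam Sx r" and lSx_le: "\<And>i. i < r \<Longrightarrow> lam Sx r \<le> Sx $$ (i,i)"
  proof -
    show "0 \<le> lam Sx r"
    proof (cases "r = 0")
      case True then show ?thesis unfolding lam_def by simp
    next
      case False then show ?thesis using lam_diag(1)[OF Sx Sxdiag Sxpos] by simp
    qed
    show "lam Sx r \<le> Sx $$ (i,i)" if "i < r" for i
      using lam_diag(2)[OF Sx Sxdiag Sxpos _ that] that by simp
  qed
  have negLam: "- Lam0 = (V t)\<^sup>T * V t - (U1 t)\<^sup>T * U1 t" if t: "0 \<le> t" for t
  proof -
    have "- Lam0 = - ((U1 t)\<^sup>T * U1 t - (V t)\<^sup>T * V t)" using Lamt[OF t] by simp
    also have "\<dots> = (V t)\<^sup>T * V t - (U1 t)\<^sup>T * U1 t"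
      by (rule eq_matI) (use Ut[OF t] Vt[OF t] in auto)
    finally show ?thesis .
  qed
  have key: "lam Sx r * c * fl.f t \<le> (\<Sum>i<r. \<Sum>k<h. (fl.U' i k t)\<^sup>2) + (\<Sum>j<m. \<Sum>k<h. (fl.V' j k t)\<^sup>2)"
    if t: "0 \<le> t" for t
  proof -
    define G where "G i j = s i * e i j t" for i j
    have V'G: "fl.V' j k t = (\<Sum>i<r. U1 t $$ (i,k) * G i j)" for j k
      unfolding fl.V'_def G_def u_def by (simp add: mult_ac)
    have U'G: "fl.U' i k t = (\<Sum>j<m. V t $$ (j,k) * G i j)" for i k
      unfolding fl.U'_def G_def v_def by (simp add: sum_distrib_left mult_ac)
    have partV: "a1 * (\<Sum>j<m. \<Sum>i<r. (G i j)\<^sup>2) \<le> (\<Sum>j<m. \<Sum>k<h. (fl.V' j k t)\<^sup>2)"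
      unfolding sum_distrib_left[of a1 "\<lambda>j. \<Sum>i<r. (G i j)\<^sup>2"]
    proof (rule sum_mono)
      fix j assume j: "j \<in> {..<m}"
      show "a1 * (\<Sum>i<r. (G i j)\<^sup>2) \<le> (\<Sum>k<h. (fl.V' j k t)\<^sup>2)"
      proof (cases "a1 = 0")
        case True then show ?thesis by (simp add: sum_nonneg)
      next
        case False
        then have hr: "\<not> h < r" and pos: "0 < lam Lam0 r" and a1e: "a1 = lam Lam0 r"
          unfolding a1_def pos_part_def by (auto split: if_splits)
        have "lam ((U1 t)\<^sup>T * U1 t - (V t)\<^sup>T * V t) r * (\<Sum>i<r. (G i j)\<^sup>2) \<le> (\<Sum>k<h. (\<Sum>i<r. U1 t $$ (i,k) * G i j)\<^sup>2)"
          by (rule eig_lower_sum[OF Ut[OF t] Vt[OF t]]) (use pos Lamt[OF t] in simp)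
        then show ?thesis unfolding a1e V'G using Lamt[OF t] by simp
      qed
    qed
    have partU: "a2 * (\<Sum>i<r. \<Sum>j<m. (G i j)\<^sup>2) \<le> (\<Sum>i<r. \<Sum>k<h. (fl.U' i k t)\<^sup>2)"
      unfolding sum_distrib_left[of a2 "\<lambda>i. \<Sum>j<m. (G i j)\<^sup>2"]
    proof (rule sum_mono)
      fix i assume i: "i \<in> {..<r}"
      show "a2 * (\<Sum>j<m. (G i j)\<^sup>2) \<le> (\<Sum>k<h. (fl.U' i k t)\<^sup>2)"
      proof (cases "a2 = 0")
        case True then show ?thesis by (simp add: sum_nonneg)
      next
        case False
        then have hm: "\<not> h < m" and pos: "0 < lam (- Lam0) m" and a2e: "a2 = lam (- Lam0) m"
          unfolding a2_def pos_part_def by (auto split: if_splits)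
        have "lam ((V t)\<^sup>T * V t - (U1 t)\<^sup>T * U1 t) m * (\<Sum>j<m. (G i j)\<^sup>2) \<le> (\<Sum>k<h. (\<Sum>j<m. V t $$ (j,k) * G i j)\<^sup>2)"
          by (rule eig_lower_sum[OF Vt[OF t] Ut[OF t]]) (use pos negLam[OF t] in simp)
        then show ?thesis unfolding a2e U'G using negLam[OF t] by simp
      qed
    qed
    have Gsum: "lam Sx r * fl.f t \<le> (\<Sum>i<r. \<Sum>j<m. (G i j)\<^sup>2)"
    proof -
      have "lam Sx r * fl.f t = (\<Sum>i<r. \<Sum>j<m. lam Sx r * (e i j t)\<^sup>2)"
        unfolding fl.f_def by (simp add: sum_distrib_left)
      also have "\<dots> \<le> (\<Sum>i<r. \<Sum>j<m. (G i j)\<^sup>2)"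
      proof (intro sum_mono)
        fix i j assume i: "i \<in> {..<r}" and j: "j \<in> {..<m}"
        have "(G i j)\<^sup>2 = Sx $$ (i,i) * (e i j t)\<^sup>2"
          unfolding G_def s_def using Sxpos i by (simp add: power_mult_distrib less_imp_le)
        then show "lam Sx r * (e i j t)\<^sup>2 \<le> (G i j)\<^sup>2"
          using lSx_le[of i] i by (simp add: mult_right_mono)
      qed
      finally show ?thesis .
    qed
    have swapG: "(\<Sum>j<m. \<Sum>i<r. (G i j)\<^sup>2) = (\<Sum>i<r. \<Sum>j<m. (G i j)\<^sup>2)" by (rule sum.swap)
    have "lam Sx r * c * fl.f t = c * (lam Sx r * fl.f t)" by (simp add: mult_ac)
    also have "\<dots> \<le> c * (\<Sum>i<r. \<Sum>j<m. (G i j)\<^sup>2)" by (rule mult_left_mono[OF Gsum cnn])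
    also have "\<dots> = a1 * (\<Sum>j<m. \<Sum>i<r. (G i j)\<^sup>2) + a2 * (\<Sum>i<r. \<Sum>j<m. (G i j)\<^sup>2)"
      unfolding c_eq swapG by (simp add: algebra_simps)
    also have "\<dots> \<le> (\<Sum>j<m. \<Sum>k<h. (fl.V' j k t)\<^sup>2) + (\<Sum>i<r. \<Sum>k<h. (fl.U' i k t)\<^sup>2)"
      by (rule add_mono[OF partV partU])
    finally show ?thesis by simp
  qed
  have kap: "0 \<le> lam Sx r * c" using lSx cnn by simp
  have fdec: "fl.f t \<le> exp (- 2 * (lam Sx r * c) * t) * fl.f 0" if "0 \<le> t" for t
    by (rule fl.decay[OF kap key that]) simp
  have part1: "\<forall>t>0. L t - Lstar \<le> exp (- 2 * lam Sx r * c * t) * (L 0 - Lstar)"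
  proof (intro allI impI)
    fix t :: real assume t: "0 < t"
    have "L t - Lstar = fl.f t / 2" using Lf t by simp
    also have "\<dots> \<le> exp (- 2 * (lam Sx r * c) * t) * fl.f 0 / 2" using fdec[of t] t by simp
    also have "\<dots> = exp (- 2 * lam Sx r * c * t) * (L 0 - Lstar)" using Lf[of 0] by (simp add: mult_ac)
    finally show "L t - Lstar \<le> exp (- 2 * lam Sx r * c * t) * (L 0 - Lstar)" .
  qed
  have part2: "h \<ge> m + r \<longrightarrow> c = lam ((U1 0)\<^sup>T * U1 0 - (V 0)\<^sup>T * V 0) r
                          + lam (- ((U1 0)\<^sup>T * U1 0 - (V 0)\<^sup>T * V 0)) m"
  proof
    assume hmr: "h \<ge> m + r"
    have n1: "0 \<le> lam Lam0 r" unfolding Lam0_def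
      by (rule eig_nonneg[OF Ut[of 0] Vt[of 0]]) (use hmr in auto)
    have n2: "0 \<le> lam (- Lam0) m" unfolding negLam[of 0, simplified]
      by (rule eig_nonneg[OF Vt[of 0] Ut[of 0]]) (use hmr in auto)
    have "a1 = lam Lam0 r" unfolding a1_def pos_part_def using hmr n1 by auto
    moreover have "a2 = lam (- Lam0) m" unfolding a2_def pos_part_def using hmr n2 by auto
    ultimately show "c = lam ((U1 0)\<^sup>T * U1 0 - (V 0)\<^sup>T * V 0) r + lam (- ((U1 0)\<^sup>T * U1 0 - (V 0)\<^sup>T * V 0)) m"
      using c_eq unfolding Lam0_def by simp
  qed
  have part3: "c > 0 \<longrightarrow> (\<exists>Vinf U1inf. Vinf \<in> carrier_mat m h \<and> U1inf \<in> carrier_mat r h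
              \<and> mat_tendsto_at_top V Vinf \<and> mat_tendsto_at_top U1 U1inf
              \<and> err W Y Sx Vinf U1inf = 0\<^sub>m r m)"
  proof
    assume cpos: "c > 0"
    define \<kappa> where "\<kappa> = (if r = 0 then 1 else lam Sx r * c)"
    have kpos: "\<kappa> > 0"
    proof (cases "r = 0")
      case True then show ?thesis unfolding \<kappa>_def by simp
    next
      case False
      then have "0 < lam Sx r" using lam_diag(1)[OF Sx Sxdiag Sxpos] by simp
      then show ?thesis unfolding \<kappa>_def using False cpos by simp
    qed
    have fb: "fl.f t \<le> exp (- 2 * \<kappa> * t) * fl.f 0" if "0 \<le> t" for t
    proof (cases "r = 0")
      case True then show ?thesis unfolding fl.f_def by simp
    next
      case False then show ?thesis unfolding \<kappa>_def using fdec[OF that] by simp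
    qed
    have sn': "\<And>i. i < r \<Longrightarrow> 0 \<le> s i" by (rule sn)
    obtain ul vl where ul: "\<forall>i<r. \<forall>k<h. ((\<lambda>t. u i k t) \<longlongrightarrow> ul i k) at_top"
      and vl: "\<forall>j<m. \<forall>k<h. ((\<lambda>t. v j k t) \<longlongrightarrow> vl j k) at_top"
      and lim: "\<forall>i<r. \<forall>j<m. WY $$ (i,j) - s i * (\<Sum>l<h. ul i l * vl j l) = 0"
      using fl.converge[OF sn' kpos fb] by auto
    define Vinf where "Vinf = mat m h (\<lambda>(j,k). vl j k)"
    define U1inf where "U1inf = mat r h (\<lambda>(i,k). ul i k)"
    have Vi: "Vinf \<in> carrier_mat m h" unfolding Vinf_def by auto
    have Ui: "U1inf \<in> carrier_mat r h" unfolding U1inf_def by auto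
    have tV: "mat_tendsto_at_top V Vinf" unfolding mat_tendsto_at_top_def Vinf_def
      using vl unfolding v_def by auto
    have tU: "mat_tendsto_at_top U1 U1inf" unfolding mat_tendsto_at_top_def U1inf_def
      using ul unfolding u_def by auto
    have ez: "err W Y Sx Vinf U1inf = 0\<^sub>m r m"
    proof (rule eq_matI)
      fix i j assume "i < dim_row (0\<^sub>m r m :: real mat)" "j < dim_col (0\<^sub>m r m :: real mat)"
      then have i: "i < r" and j: "j < m" by auto
      have "err W Y Sx Vinf U1inf $$ (i,j) = WY $$ (i,j) - s i * (\<Sum>l<h. U1inf $$ (i,l) * Vinf $$ (j,l))"
        unfolding WY_def s_def by (rule err_entry[OF W Y Sx Vi Ui i j])
      also have "\<dots> = WY $$ (i,j) - s i * (\<Sum>l<h. ul i l * vl j l)"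
        unfolding U1inf_def Vinf_def using i j by simp
      also have "\<dots> = 0" using lim i j by simp
      finally show "err W Y Sx Vinf U1inf $$ (i,j) = 0\<^sub>m r m $$ (i,j)" using i j by simp
    qed (use err_carrier[OF W Y Sx Vi Ui] in auto)
    show "\<exists>Vinf U1inf. Vinf \<in> carrier_mat m h \<and> U1inf \<in> carrier_mat r h
              \<and> mat_tendsto_at_top V Vinf \<and> mat_tendsto_at_top U1 U1inf
              \<and> err W Y Sx Vinf U1inf = 0\<^sub>m r m"
      using Vi Ui tV tU ez by blast
  qed
  show ?thesis using part1 part2 part3 by blast
qed

end
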